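(* Let $\Pi$ be a program of $(d,f)$-tree-like rules without inequalities over the $(\mathrm{Col},\delta)$-signature, and let $\mathcal N_\Pi$ be the GNN constructed from $\Pi$ as described in the context, with $L=d+2$ layers. For every $(\mathrm{Col},\delta)$-dataset $D$, every layer $1\le\ell<L$, every position $1\le i\le\delta_\ell$ and every term $t$ occurring in $D$, letting $\mathbf v_\ell$ be the vector labelling the vertex $v_t$ at layer $\ell$ when $\mathcal N_\Pi$ is applied to $\mathrm{enc}(D)$: the $i$-th component of $\mathbf v_\ell$ equals $1$ if there exists a substitution $\nu$ with $\nu(x)=t$ such that every atom of $\tau_i\nu$ belongs to $D$, and equals $0$ otherwise.
   Context: Datalog basics. Terms are constants or variables; atoms are $P(t_1,\dots,t_n)$; a fact is a variable-free atom; a dataset is a finite set of facts. A rule is $B_1\wedge\dots\wedge B_n\to H$ (literals $B_i$, possibly inequalities $s\neq t$; empty body written $\top$); a program is a finite set of rules. A substitution maps finitely many variables to variable-free terms. For a rule $r$ and dataset $D$, $T_r(D)$ is the set of $H\nu$ for each substitution $\nu$ mapping all variables of $r$ to terms occurring in $D$ such that every instantiated body atom lies in $D$ and every instantiated body inequality $s\neq t$ has $s\neq t$; $T_\Pi(D)=\bigcup_{r\in\Pi}T_r(D)$. Formulas/rules are equal up to variable renaming if a bijection of variables maps one onto the other with exactly the same conjuncts. GNNs and canonical encoding. For finite colour set $\mathrm{Col}$ and $\delta\in\mathbb N$, the $(\mathrm{Col},\delta)$-signature has binary predicates $E^c$ ($c\in\mathrm{Col}$) and unary predicates $U_1,\dots,U_\delta$;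 a $(\mathrm{Col},\delta)$-dataset is a dataset over it. Its canonical encoding $\mathrm{enc}(D)$ is the graph with a vertex $v_t$ per term $t$ occurring in $D$, edge sets $E^c=\{(v_t,v_s)\mid E^c(t,s)\in D\}$, and feature vector of $v_t$ in $\{0,1\}^\delta$ whose $j$-th entry is $1$ iff $U_j(t)\in D$. A $(\mathrm{Col},\delta)$-GNN with $L$ layers has dimensions $\delta_0=\delta,\dots,\delta_L=\delta$, matrices $A_\ell,B_\ell^c\in\mathbb R^{\delta_\ell\times\delta_{\ell-1}}$, biases $b_\ell\in\mathbb R^{\delta_\ell}$, aggregations $\mathrm{agg}_\ell$, activation $\sigma$ and classification $\mathrm{cls}$; the layer-$\ell$ vector of $v$ is $\mathbf v_\ell=\sigma(A_\ell\mathbf v_{\ell-1}+\sum_cB_\ell^c\,\mathrm{agg}_\ell(\{\!\{\mathbf u_{\ell-1}\mid(v,u)\in E^c\}\!\})+b_\ell)$ with $\mathbf v_0$ the input feature; $T_{\mathcal N}(D)$ is $D$'s binary facts plus $U_i(t)$ for each $t$ and $i$ with $\mathrm{cls}$ of the $i$-th entry of the layer-$L$ vector of $v_t$ equal to $1$. Tree-like formulas. Inductively: $\top$ and $U(x)$ ($U$ unary) are tree-like for $x$; if $\varphi_1,\varphi_2$ are tree-like for $x$ sharing no variable other than $x$, then $\varphi_1\wedge\varphi_2$ is tree-like for $x$; if $\varphi_1,\dots,\varphi_n$ are tree-like for pairwise distinct variables $y_1,\dots,y_n$, none containing $x$ and pairwise variable-disjoint, then $\bigwedge_{i=1}^n(E^c(x,y_i)\wedge\varphi_i)\wedge\bigwedge_{i<j}y_i\neq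 y_j$ is tree-like for $x$. The fan-out of a variable $x$ is the number of distinct $y$ with some $E^c(x,y)$ a conjunct; the depth of $x$ is the maximal length $n$ of a chain $E^{c_1}(x_0,x_1),\dots,E^{c_n}(x_{n-1},x_n)$ of conjuncts with $x_n=x$; the depth of the formula is the maximum depth of its variables. A formula is $(d,f)$-tree-like if each variable of depth $i$ has $i\le d$ and fan-out at most $f\cdot(d-i)$; a rule is $(d,f)$-tree-like if it is $\varphi\to U(x)$ with $\varphi$ a $(d,f)$-tree-like formula for $x$. Construction of $\mathcal N_\Pi$. Fix natural numbers $d,f$ and a program $\Pi$ of $(d,f)$-tree-like rules without inequalities. Let $\tau_1,\dots,\tau_n$ list, up to variable renaming and each exactly once, all $(d,f)$-tree-like formulas for a fixed variable $x$ without inequalities, ordered by non-decreasing depth. Write each as $\tau_i=\varphi_{i,0}\wedge\bigwedge_{k=1}^{m_i}(E^{c_k}(x,y_k)\wedge\varphi_{i,k})$, where $\varphi_{i,0}$ is a conjunction of unary atoms on $x$ (possibly $\top$), each $\varphi_{i,k}$ ($k\ge1$) is a $(d-1,f)$-tree-like formula for $y_k$ (possibly $\top$), the $\varphi_{i,k}$ are pairwise variable-disjoint, and the colours $c_k$ need not be distinct. $\mathcal N_\Pi$ is the $(\mathrm{Col},\delta)$-GNN with $L=d+2$ layers, aggregation $\max$ (componentwise, $0$ on the empty multiset) in every layer, activation $\mathrm{ReLU}(z)=\max(0,z)$, classification the step function with threshold $1$, and for $1\le\ell<L$ dimension $\delta_\ell$ equal to the number of formulas $\tau_i$ of depth at most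 $\ell-1$ (so these are $\tau_1,\dots,\tau_{\delta_\ell}$). For $c\in\mathrm{Col}$, $1\le\ell\le L$, $1\le i\le\delta_\ell$, $1\le j\le\delta_{\ell-1}$: $(A_\ell)_{i,j}=1$ if (a) $\ell=1$ and $\tau_i$ contains $U_j(x)$; or (b) $2\le\ell<L$ and either $i\le\delta_{\ell-1}$ and $i=j$, or $\delta_{\ell-1}<i\le\delta_\ell$ and $\varphi_{i,0}$ equals $\tau_j$ (up to renaming); or (c) $\ell=L$ and $\Pi$ contains the rule $\tau_j\to U_i(x)$ up to variable renaming; otherwise $(A_\ell)_{i,j}=0$. $(B_\ell^c)_{i,j}=1$ if $2\le\ell<L$ and there is $1\le k\le m_i$ with $c=c_k$ and $\varphi_{i,k}$ equal to $\tau_j$ up to variable renaming; otherwise $0$. $(b_\ell)_i=1-\sum_{j=1}^{\delta_{\ell-1}}\big((A_\ell)_{i,j}+\sum_{c\in\mathrm{Col}}(B_\ell^c)_{i,j}\big)$ if $\ell=1$, or if $1\le\ell<L$ and $\delta_{\ell-1}<i\le\delta_\ell$; otherwise $(b_\ell)_i=0$. *)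

theory Defs
  imports Complex_Main "HOL-Library.Multiset"
begin

text \<open>Atoms: binary E^c(s,t) with colour c, unary U_j(t) (1-based index j).
  Terms of type 't: variables are nat, constants are an arbitrary type 'c.
  A conjunction (formula without inequalities) is the finite set of its conjuncts;
  the empty set is the empty conjunction (top).\<close>

datatype ('col, 't) atom = EA 'col 't 't | UA nat 't

fun atom_terms :: "('col, 't) atom \<Rightarrow> 't set" where
  "atom_terms (EA c s t) = {s, t}"
| "atom_terms (UA j t) = {t}"

fun subst_atom :: "('t \<Rightarrow> 's) \<Rightarrow> ('col, 't) atom \<Rightarrow> ('col, 's) atom" where
  "subst_atom h (EA c s t) = EA c (h s) (h t)"
| "subst_atom h (UA j t) = UA j (h t)"

type_synonym 'col formula = "('col, nat) atom set"
type_synonym 'col rule = "'col formula \<times> ('col, nat) atom"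

definition fvars :: "'col formula \<Rightarrow> nat set" where
  "fvars \<phi> = \<Union> (atom_terms ` \<phi>)"

definition adom :: "('col, 'c) atom set \<Rightarrow> 'c set" where
  "adom D = \<Union> (atom_terms ` D)"

definition sig_dataset :: "nat \<Rightarrow> ('col, 'c) atom set \<Rightarrow> bool" where
  "sig_dataset \<delta> D \<longleftrightarrow> finite D \<and> (\<forall>j t. UA j t \<in> D \<longrightarrow> 1 \<le> j \<and> j \<le> \<delta>)"

definition eq_ren :: "'col formula \<Rightarrow> 'col formula \<Rightarrow> bool" where
  "eq_ren \<phi> \<psi> \<longleftrightarrow> (\<exists>h. bij h \<and> subst_atom h ` \<phi> = \<psi>)"

definition eq_ren_rule :: "'col rule \<Rightarrow> 'col rule \<Rightarrow> bool" where
  "eq_ren_rule r r' \<longleftrightarrow>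
     (\<exists>h. bij h \<and> subst_atom h ` fst r = fst r' \<and> subst_atom h (snd r) = snd r')"

inductive tree_like :: "nat \<Rightarrow> nat \<Rightarrow> 'col formula \<Rightarrow> bool" where
  tl_top: "tree_like \<delta> x {}"
| tl_unary: "1 \<le> j \<Longrightarrow> j \<le> \<delta> \<Longrightarrow> tree_like \<delta> x {UA j x}"
| tl_conj: "tree_like \<delta> x \<phi>1 \<Longrightarrow> tree_like \<delta> x \<phi>2 \<Longrightarrow> fvars \<phi>1 \<inter> fvars \<phi>2 \<subseteq> {x}
            \<Longrightarrow> tree_like \<delta> x (\<phi>1 \<union> \<phi>2)"
| tl_edges: "length ys = length cs \<Longrightarrow> length phis = length cs \<Longrightarrow> distinct ys
   \<Longrightarrow> (\<forall>k<length cs. tree_like \<delta> (ys ! k) (phis ! k))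
   \<Longrightarrow> (\<forall>k<length cs. x \<notin> insert (ys ! k) (fvars (phis ! k)))
   \<Longrightarrow> (\<forall>k<length cs. \<forall>k'<length cs. k \<noteq> k' \<longrightarrow>
          insert (ys ! k) (fvars (phis ! k)) \<inter> insert (ys ! k') (fvars (phis ! k')) = {})
   \<Longrightarrow> tree_like \<delta> x (\<Union>k<length cs. insert (EA (cs ! k) x (ys ! k)) (phis ! k))"

inductive chain_to :: "'col formula \<Rightarrow> nat \<Rightarrow> nat \<Rightarrow> bool" where
  "chain_to \<phi> 0 y"
| "chain_to \<phi> n y \<Longrightarrow> EA c y z \<in> \<phi> \<Longrightarrow> chain_to \<phi> (Suc n) z"

definition var_depth :: "'col formula \<Rightarrow> nat \<Rightarrow> nat" where
  "var_depth \<phi> y = (GREATEST n. chain_to \<phi> n y)"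

definition fdepth :: "'col formula \<Rightarrow> nat" where
  "fdepth \<phi> = Max (insert 0 (var_depth \<phi> ` fvars \<phi>))"

definition fanout :: "'col formula \<Rightarrow> nat \<Rightarrow> nat" where
  "fanout \<phi> y = card {z. \<exists>c. EA c y z \<in> \<phi>}"

definition dftree :: "nat \<Rightarrow> nat \<Rightarrow> nat \<Rightarrow> nat \<Rightarrow> 'col formula \<Rightarrow> bool" where
  "dftree \<delta> d f x \<phi> \<longleftrightarrow> tree_like \<delta> x \<phi> \<and>
     (\<forall>y\<in>fvars \<phi>. (\<forall>n. chain_to \<phi> n y \<longrightarrow> n \<le> d) \<and> fanout \<phi> y \<le> f * (d - var_depth \<phi> y))"

definition dftree_rule :: "nat \<Rightarrow> nat \<Rightarrow> nat \<Rightarrow> 'col rule \<Rightarrow> bool" where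
  "dftree_rule \<delta> d f r \<longleftrightarrow>
     (\<exists>\<phi> j y. r = (\<phi>, UA j y) \<and> 1 \<le> j \<and> j \<le> \<delta> \<and> dftree \<delta> d f y \<phi>)"

definition phi0 :: "nat \<Rightarrow> 'col formula \<Rightarrow> 'col formula" where
  "phi0 x \<phi> = {a \<in> \<phi>. \<exists>j. a = UA j x}"

definition reach :: "'col formula \<Rightarrow> nat \<Rightarrow> nat \<Rightarrow> bool" where
  "reach \<phi> = (\<lambda>a b. \<exists>c. EA c a b \<in> \<phi>)\<^sup>*\<^sup>*"

definition subf :: "'col formula \<Rightarrow> nat \<Rightarrow> 'col formula" where
  "subf \<phi> y = {a \<in> \<phi>. \<forall>z\<in>atom_terms a. reach \<phi> y z}"

text \<open>tau_1..tau_n (here the list, 1-based access via tau) lists every (d,f)-tree-like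
  formula for x exactly once up to renaming, by non-decreasing depth.\<close>
definition tree_enum :: "nat \<Rightarrow> nat \<Rightarrow> nat \<Rightarrow> nat \<Rightarrow> 'col formula list \<Rightarrow> bool" where
  "tree_enum \<delta> d f x \<tau> \<longleftrightarrow>
     (\<forall>\<phi>\<in>set \<tau>. dftree \<delta> d f x \<phi>) \<and>
     (\<forall>\<phi>. dftree \<delta> d f x \<phi> \<longrightarrow> (\<exists>!i. i < length \<tau> \<and> eq_ren \<phi> (\<tau> ! i))) \<and>
     sorted (map fdepth \<tau>)"

definition tau :: "'col formula list \<Rightarrow> nat \<Rightarrow> 'col formula" where
  "tau \<tau> i = \<tau> ! (i - 1)"

record 'col gnn =
  gL :: nat
  gdim :: "nat \<Rightarrow> nat"
  gA :: "nat \<Rightarrow> nat \<Rightarrow> nat \<Rightarrow> real"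
  gB :: "nat \<Rightarrow> 'col \<Rightarrow> nat \<Rightarrow> nat \<Rightarrow> real"
  gb :: "nat \<Rightarrow> nat \<Rightarrow> real"
  gagg :: "nat \<Rightarrow> (nat \<Rightarrow> real) multiset \<Rightarrow> nat \<Rightarrow> real"
  gact :: "real \<Rightarrow> real"
  gcls :: "real \<Rightarrow> real"

text \<open>Layer-l vectors (indices 1..dim l) of all vertices of a graph given by
  coloured edge relations E and input features feat.\<close>
primrec gnn_vec :: "'col gnn \<Rightarrow> ('col \<Rightarrow> 'n \<Rightarrow> 'n \<Rightarrow> bool) \<Rightarrow> ('n \<Rightarrow> nat \<Rightarrow> real)
    \<Rightarrow> nat \<Rightarrow> 'n \<Rightarrow> nat \<Rightarrow> real" where
  "gnn_vec N E feat 0 = feat"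
| "gnn_vec N E feat (Suc l) = (\<lambda>v i. gact N
      ((\<Sum>j = 1..gdim N l. gA N (Suc l) i j * gnn_vec N E feat l v j)
       + (\<Sum>c\<in>UNIV. \<Sum>j = 1..gdim N l. gB N (Suc l) c i j *
            gagg N (Suc l) (image_mset (gnn_vec N E feat l) (mset_set {u. E c v u})) j)
       + gb N (Suc l) i))"

text \<open>Canonical encoding: vertex v_t is represented by the term t itself.\<close>
definition enc_E :: "('col, 'c) atom set \<Rightarrow> 'col \<Rightarrow> 'c \<Rightarrow> 'c \<Rightarrow> bool" where
  "enc_E D c t s \<longleftrightarrow> EA c t s \<in> D"

definition enc_feat :: "('col, 'c) atom set \<Rightarrow> 'c \<Rightarrow> nat \<Rightarrow> real" where
  "enc_feat D t j = (if UA j t \<in> D then 1 else 0)"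

definition relu :: "real \<Rightarrow> real" where
  "relu z = max 0 z"

definition max_agg :: "(nat \<Rightarrow> real) multiset \<Rightarrow> nat \<Rightarrow> real" where
  "max_agg M j = (if M = {#} then 0 else Max ((\<lambda>w. w j) ` set_mset M))"

definition step1 :: "real \<Rightarrow> real" where
  "step1 z = (if z \<ge> 1 then 1 else 0)"

definition NPi_dim :: "nat \<Rightarrow> nat \<Rightarrow> 'col formula list \<Rightarrow> nat \<Rightarrow> nat" where
  "NPi_dim \<delta> d \<tau> l = (if 1 \<le> l \<and> l < d + 2
      then card {i. 1 \<le> i \<and> i \<le> length \<tau> \<and> fdepth (tau \<tau> i) \<le> l - 1} else \<delta>)"

definition NPi_A :: "nat \<Rightarrow> nat \<Rightarrow> nat \<Rightarrow> 'col formula list \<Rightarrow> 'col rule set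
    \<Rightarrow> nat \<Rightarrow> nat \<Rightarrow> nat \<Rightarrow> real" where
  "NPi_A \<delta> d x \<tau> \<Pi> l i j = (if
       (l = 1 \<and> UA j x \<in> tau \<tau> i)
     \<or> (2 \<le> l \<and> l < d + 2 \<and>
         ((i \<le> NPi_dim \<delta> d \<tau> (l - 1) \<and> i = j)
          \<or> (NPi_dim \<delta> d \<tau> (l - 1) < i \<and> i \<le> NPi_dim \<delta> d \<tau> l
             \<and> eq_ren (phi0 x (tau \<tau> i)) (tau \<tau> j))))
     \<or> (l = d + 2 \<and> (\<exists>r\<in>\<Pi>. eq_ren_rule r (tau \<tau> j, UA i x)))
     then 1 else 0)"

definition NPi_B :: "nat \<Rightarrow> nat \<Rightarrow> nat \<Rightarrow> 'col formula list \<Rightarrow> nat \<Rightarrow> 'col \<Rightarrow> nat \<Rightarrow> nat \<Rightarrow> real" where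
  "NPi_B \<delta> d x \<tau> l c i j = (if
       2 \<le> l \<and> l < d + 2 \<and> NPi_dim \<delta> d \<tau> (l - 1) < i \<and> i \<le> NPi_dim \<delta> d \<tau> l \<and>
       (\<exists>y. EA c x y \<in> tau \<tau> i \<and> eq_ren (subf (tau \<tau> i) y) (tau \<tau> j))
     then 1 else 0)"

definition NPi_b :: "nat \<Rightarrow> nat \<Rightarrow> nat \<Rightarrow> 'col::finite formula list \<Rightarrow> 'col rule set
    \<Rightarrow> nat \<Rightarrow> nat \<Rightarrow> real" where
  "NPi_b \<delta> d x \<tau> \<Pi> l i = (if l = 1 \<or> (1 \<le> l \<and> l < d + 2 \<and>
        NPi_dim \<delta> d \<tau> (l - 1) < i \<and> i \<le> NPi_dim \<delta> d \<tau> l)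
     then 1 - (\<Sum>j = 1..NPi_dim \<delta> d \<tau> (l - 1).
                  NPi_A \<delta> d x \<tau> \<Pi> l i j + (\<Sum>c\<in>UNIV. NPi_B \<delta> d x \<tau> l c i j))
     else 0)"

definition NPi :: "nat \<Rightarrow> nat \<Rightarrow> nat \<Rightarrow> 'col::finite formula list \<Rightarrow> 'col rule set \<Rightarrow> 'col gnn" where
  "NPi \<delta> d x \<tau> \<Pi> = \<lparr> gL = d + 2, gdim = NPi_dim \<delta> d \<tau>, gA = NPi_A \<delta> d x \<tau> \<Pi>,
      gB = NPi_B \<delta> d x \<tau>, gb = NPi_b \<delta> d x \<tau> \<Pi>, gagg = (\<lambda>_. max_agg),
      gact = relu, gcls = step1 \<rparr>"

end

theory Submission
  imports Defs
begin

definition sat :: "('col, 'c) atom set \<Rightarrow> 'col formula \<Rightarrow> nat \<Rightarrow> 'c \<Rightarrow> bool" where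
  "sat D \<phi> z u \<longleftrightarrow> (\<exists>\<nu>. \<nu> z = u \<and> subst_atom \<nu> ` \<phi> \<subseteq> D)"

lemma subst_comp: "subst_atom g (subst_atom h a) = subst_atom (g \<circ> h) a"
  by (cases a) auto

lemma subst_cong: "(\<And>z. z \<in> atom_terms a \<Longrightarrow> f z = g z) \<Longrightarrow> subst_atom f a = subst_atom g a"
  by (cases a) auto

lemma subst_id: "subst_atom id a = a" by (cases a) auto

lemma atom_terms_ne: "atom_terms a \<noteq> {}" by (cases a) auto

lemma atom_terms_subst: "atom_terms (subst_atom h a) = h ` atom_terms a" by (cases a) auto

lemma fvars_image: "fvars (subst_atom h ` \<phi>) = h ` fvars \<phi>"
  by (auto simp: fvars_def atom_terms_subst)

lemma fvars_union: "fvars (A \<union> B) = fvars A \<union> fvars B" by (auto simp: fvars_def)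

lemma fvars_UN: "fvars (\<Union>k\<in>K. A k) = (\<Union>k\<in>K. fvars (A k))" by (auto simp: fvars_def)
lemma fvars_insert: "fvars (insert a A) = atom_terms a \<union> fvars A" by (auto simp: fvars_def)
lemma fvars_empty[simp]: "fvars {} = {}" by (auto simp: fvars_def)

lemma fvars_mono: "A \<subseteq> B \<Longrightarrow> fvars A \<subseteq> fvars B" by (auto simp: fvars_def)

lemma fvarsI: "a \<in> \<phi> \<Longrightarrow> z \<in> atom_terms a \<Longrightarrow> z \<in> fvars \<phi>" by (auto simp: fvars_def)

lemma EA_fvars: "EA c a b \<in> \<phi> \<Longrightarrow> a \<in> fvars \<phi> \<and> b \<in> fvars \<phi>"
  unfolding fvars_def by (metis UN_I atom_terms.simps(1) insertI1 insert_commute)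

lemma UA_fvars: "UA j a \<in> \<phi> \<Longrightarrow> a \<in> fvars \<phi>"
  unfolding fvars_def by (metis UN_I atom_terms.simps(2) insertI1)

lemma subst_inj: "inj h \<Longrightarrow> subst_atom h a = subst_atom h b \<Longrightarrow> a = b"
  by (cases a; cases b) (auto dest: injD)

lemma rename_back: "bij h \<Longrightarrow> subst_atom (inv h) ` (subst_atom h ` \<phi>) = \<phi>"
proof -
  assume "bij h"
  then have "inv h \<circ> h = id" by (simp add: bij_is_inj)
  then show ?thesis by (simp add: image_image subst_comp subst_id)
qed

lemma UN_lt_iff: "a \<in> (\<Union>k<n. A k) \<longleftrightarrow> (\<exists>k<n. a \<in> A k)"
  by (simp only: UN_iff lessThan_iff Bex_def)

lemma UN_ltE: "a \<in> (\<Union>k<n. A k) \<Longrightarrow> (\<And>k. k < n \<Longrightarrow> a \<in> A k \<Longrightarrow> P) \<Longrightarrow> P"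
  by (simp only: UN_lt_iff) (elim exE conjE)

lemma UN_ltI: "k < n \<Longrightarrow> a \<in> A k \<Longrightarrow> a \<in> (\<Union>k<n. A k)"
  by (simp only: UN_lt_iff) (intro exI conjI)

lemma insert_not: "a \<in> insert b A \<Longrightarrow> a \<noteq> b \<Longrightarrow> a \<in> A" by simp

lemma neE: "A \<noteq> {} \<Longrightarrow> (\<And>a. a \<in> A \<Longrightarrow> P) \<Longrightarrow> P" by blast

lemma tl_finite: "tree_like \<delta> x \<phi> \<Longrightarrow> finite \<phi>"
  by (induction rule: tree_like.induct) auto

lemma tl_T1: "tree_like \<delta> x \<phi> \<Longrightarrow> EA c a x \<notin> \<phi>"
proof (induction rule: tree_like.induct)
  case (tl_edges ys cs phis \<delta> x)
  show ?case
  proof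
    assume "EA c a x \<in> (\<Union>k<length cs. insert (EA (cs ! k) x (ys ! k)) (phis ! k))"
    then obtain k where k: "k < length cs" "EA c a x \<in> insert (EA (cs ! k) x (ys ! k)) (phis ! k)" by (rule UN_ltE)
    have nx: "x \<notin> insert (ys ! k) (fvars (phis ! k))" using tl_edges.hyps(4)[rule_format, OF k(1)] .
    show False
    proof (cases "EA c a x = EA (cs ! k) x (ys ! k)")
      case True then show False using nx by simp
    next
      case False
      then have "EA c a x \<in> phis ! k" using k(2) insert_not by metis
      then have "x \<in> fvars (phis ! k)" by (rule EA_fvars[THEN conjunct2])
      then show False using nx by simp
    qed
  qed
qed auto

lemma tl_T5: "tree_like \<delta> x \<phi> \<Longrightarrow> UA j z \<in> \<phi> \<Longrightarrow> 1 \<le> j \<and> j \<le> \<delta>"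
  by (induction rule: tree_like.induct) auto

lemma tl_T2: "tree_like \<delta> x \<phi> \<Longrightarrow> z \<in> fvars \<phi> \<Longrightarrow> z = x \<or> (\<exists>c a. EA c a z \<in> \<phi>)"
proof (induction rule: tree_like.induct)
  case (tl_conj \<delta> x \<phi>1 \<phi>2)
  then show ?case by (auto simp: fvars_union)
next
  case (tl_edges ys cs phis \<delta> x)
  from tl_edges.prems obtain k where k: "k < length cs" "z \<in> fvars (insert (EA (cs ! k) x (ys ! k)) (phis ! k))"
    unfolding fvars_UN by blast
  then have "z = x \<or> z = ys ! k \<or> z \<in> fvars (phis ! k)" by (simp add: fvars_insert)
  then show ?case
  proof (elim disjE)
    assume "z = ys ! k"
    have "EA (cs ! k) x (ys ! k) \<in> (\<Union>k<length cs. insert (EA (cs ! k) x (ys ! k)) (phis ! k))"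
      using k(1) by (rule UN_ltI) simp
    then show ?case using \<open>z = ys ! k\<close> by blast
  next
    assume "z \<in> fvars (phis ! k)"
    then have "z = ys ! k \<or> (\<exists>c a. EA c a z \<in> phis ! k)" using tl_edges.IH k by blast
    then show ?case
    proof
      assume "z = ys ! k"
      have "EA (cs ! k) x (ys ! k) \<in> (\<Union>k<length cs. insert (EA (cs ! k) x (ys ! k)) (phis ! k))"
        using k(1) by (rule UN_ltI) simp
      then show ?case using \<open>z = ys ! k\<close> by blast
    next
      assume "\<exists>c a. EA c a z \<in> phis ! k"
      then obtain c a where "EA c a z \<in> phis ! k" by blast
      then have "EA c a z \<in> (\<Union>k<length cs. insert (EA (cs ! k) x (ys ! k)) (phis ! k))"
        by (rule UN_ltI[OF k(1) insertI2])
      then show ?case by blast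
    qed
  qed simp
qed (auto simp: fvars_union fvars_insert)

lemma tl_root_in: "tree_like \<delta> x \<phi> \<Longrightarrow> \<phi> \<noteq> {} \<Longrightarrow> x \<in> fvars \<phi>"
proof (induction rule: tree_like.induct)
  case (tl_edges ys cs phis \<delta> x)
  from tl_edges.prems obtain a where "a \<in> (\<Union>k<length cs. insert (EA (cs ! k) x (ys ! k)) (phis ! k))"
    by (rule neE)
  then obtain k where "k < length cs" by (rule UN_ltE)
  then have "EA (cs ! k) x (ys ! k) \<in> (\<Union>k<length cs. insert (EA (cs ! k) x (ys ! k)) (phis ! k))" by (rule UN_ltI) simp
  then show ?case by (rule EA_fvars[THEN conjunct1])
next
  case (tl_conj \<delta> x \<phi>1 \<phi>2)
  then show ?case by (auto simp: fvars_union)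
qed (auto simp: fvars_insert)

lemma reach_step: "reach \<phi> a b \<Longrightarrow> EA c b z \<in> \<phi> \<Longrightarrow> reach \<phi> a z"
  unfolding reach_def by (rule rtranclp.rtrancl_into_rtrancl) auto

lemma reach_mono: "\<phi> \<subseteq> \<psi> \<Longrightarrow> reach \<phi> a b \<Longrightarrow> reach \<psi> a b"
  unfolding reach_def by (erule rtranclp_mono[THEN predicate2D, rotated]) auto

lemma reach_edge_first: "EA c a b \<in> \<phi> \<Longrightarrow> reach \<phi> b z \<Longrightarrow> reach \<phi> a z"
  unfolding reach_def by (rule converse_rtranclp_into_rtranclp) auto

lemma tl_T3: "tree_like \<delta> x \<phi> \<Longrightarrow> a \<in> \<phi> \<Longrightarrow> z \<in> atom_terms a \<Longrightarrow> reach \<phi> x z"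
proof (induction arbitrary: a z rule: tree_like.induct)
  case (tl_unary j \<delta> x)
  then show ?case by (auto simp: reach_def)
next
  case (tl_conj \<delta> x \<phi>1 \<phi>2)
  from tl_conj.prems(1) show ?case
  proof
    assume "a \<in> \<phi>1" then show ?case using tl_conj.IH(1) tl_conj.prems(2) reach_mono[of \<phi>1 "\<phi>1 \<union> \<phi>2"] by blast
  next
    assume "a \<in> \<phi>2" then show ?case using tl_conj.IH(2) tl_conj.prems(2) reach_mono[of \<phi>2 "\<phi>1 \<union> \<phi>2"] by blast
  qed
next
  case (tl_edges ys cs phis \<delta> x)
  let ?U = "\<Union>k<length cs. insert (EA (cs ! k) x (ys ! k)) (phis ! k)"
  from tl_edges.prems(1) obtain k where k: "k < length cs" "a \<in> insert (EA (cs ! k) x (ys ! k)) (phis ! k)"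
    by (rule UN_ltE)
  have e: "EA (cs ! k) x (ys ! k) \<in> ?U" using k(1) by (rule UN_ltI) simp
  have sub: "phis ! k \<subseteq> ?U" using k(1) by (auto intro: UN_ltI)
  show ?case
  proof (cases "a = EA (cs ! k) x (ys ! k)")
    case True
    then have "z = x \<or> z = ys ! k" using tl_edges.prems by auto
    then show ?thesis
    proof
      assume "z = ys ! k" then show ?thesis using e reach_edge_first[OF e] by (simp add: reach_def)
    qed (simp add: reach_def)
  next
    case False
    then have "a \<in> phis ! k" using k by auto
    then have "reach (phis ! k) (ys ! k) z" using tl_edges.IH k tl_edges.prems by blast
    then have "reach ?U (ys ! k) z" using reach_mono[OF sub] by blast
    then show ?thesis using reach_edge_first[OF e] by blast
  qed
qed simp

lemma reach_local:
  assumes "\<forall>c a b. EA c a b \<in> \<phi> \<longrightarrow> a \<in> V \<longrightarrow> b \<in> V \<and> EA c a b \<in> \<psi>"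
    and "reach \<phi> y z" and "y \<in> V"
  shows "z \<in> V \<and> reach \<psi> y z"
  using assms(2,3) unfolding reach_def
proof (induction rule: rtranclp_induct)
  case base then show ?case by simp
next
  case (step b z)
  then obtain c where e: "EA c b z \<in> \<phi>" by blast
  from step have bV: "b \<in> V" and r: "(\<lambda>a b. \<exists>c. EA c a b \<in> \<psi>)\<^sup>*\<^sup>* y b" by auto
  from assms(1) e bV have "z \<in> V" "EA c b z \<in> \<psi>" by auto
  then show ?case using r by (simp add: rtranclp.rtrancl_into_rtrancl[where r="\<lambda>a b. \<exists>c. EA c a b \<in> \<psi>"]) (metis (mono_tags, lifting) rtranclp.simps)
qed

lemma subf_local:
  assumes "\<psi> \<subseteq> \<phi>" "y \<in> V"
    and "\<forall>c a b. EA c a b \<in> \<phi> \<longrightarrow> a \<in> V \<longrightarrow> b \<in> V \<and> EA c a b \<in> \<psi>"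
    and "\<forall>a\<in>\<phi>. atom_terms a \<subseteq> V \<longrightarrow> a \<in> \<psi>"
  shows "subf \<phi> y = subf \<psi> y"
proof
  show "subf \<phi> y \<subseteq> subf \<psi> y"
  proof
    fix a assume "a \<in> subf \<phi> y"
    then have a: "a \<in> \<phi>" "\<forall>z\<in>atom_terms a. reach \<phi> y z" by (auto simp: subf_def)
    then have "\<forall>z\<in>atom_terms a. z \<in> V \<and> reach \<psi> y z" using reach_local[OF assms(3) _ assms(2)] by blast
    then show "a \<in> subf \<psi> y" using assms(4) a(1) by (auto simp: subf_def)
  qed
next
  show "subf \<psi> y \<subseteq> subf \<phi> y"
    using assms(1) reach_mono[OF assms(1)] by (auto simp: subf_def)
qed

lemma subf_sub: "subf \<phi> y \<subseteq> \<phi>" by (auto simp: subf_def)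

lemma subf_self: "tree_like \<delta> y \<psi> \<Longrightarrow> subf \<psi> y = \<psi>"
  using tl_T3 by (auto simp: subf_def)

lemma subf_conj:
  assumes "tree_like \<delta> x \<phi>1" "fvars \<phi>1 \<inter> fvars \<phi>2 \<subseteq> {x}" "EA c x y \<in> \<phi>1"
  shows "subf (\<phi>1 \<union> \<phi>2) y = subf \<phi>1 y"
proof (rule subf_local[where V="fvars \<phi>1 - {x}"])
  have "y \<noteq> x" using tl_T1[OF assms(1)] assms(3) by metis
  then show "y \<in> fvars \<phi>1 - {x}" using EA_fvars[OF assms(3)] by blast
  show "\<forall>c a b. EA c a b \<in> \<phi>1 \<union> \<phi>2 \<longrightarrow> a \<in> fvars \<phi>1 - {x} \<longrightarrow> b \<in> fvars \<phi>1 - {x} \<and> EA c a b \<in> \<phi>1"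
  proof (intro allI impI)
    fix c a b assume e: "EA c a b \<in> \<phi>1 \<union> \<phi>2" and a: "a \<in> fvars \<phi>1 - {x}"
    have "EA c a b \<in> \<phi>1"
    proof (rule ccontr)
      assume "EA c a b \<notin> \<phi>1"
      then have "EA c a b \<in> \<phi>2" using e by blast
      then have "a \<in> fvars \<phi>2" by (rule EA_fvars[THEN conjunct1])
      then show False using a assms(2) by blast
    qed
    moreover have "b \<noteq> x" using tl_T1[OF assms(1)] calculation by metis
    ultimately show "b \<in> fvars \<phi>1 - {x} \<and> EA c a b \<in> \<phi>1" using EA_fvars[of c a b \<phi>1] by blast
  qed
  show "\<forall>a\<in>\<phi>1 \<union> \<phi>2. atom_terms a \<subseteq> fvars \<phi>1 - {x} \<longrightarrow> a \<in> \<phi>1"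
  proof (intro ballI impI)
    fix a assume a: "a \<in> \<phi>1 \<union> \<phi>2" "atom_terms a \<subseteq> fvars \<phi>1 - {x}"
    show "a \<in> \<phi>1"
    proof (rule ccontr)
      assume "a \<notin> \<phi>1"
      then have "a \<in> \<phi>2" using a by blast
      obtain z where z: "z \<in> atom_terms a" by (rule neE[OF atom_terms_ne])
      then have "z \<in> fvars \<phi>2" using fvarsI[OF \<open>a \<in> \<phi>2\<close>] by blast
      then show False using a(2) z assms(2) by blast
    qed
  qed
qed simp

lemma subf_edges:
  assumes "\<forall>k<length cs. tree_like \<delta> (ys ! k) (phis ! k)"
    and "\<forall>k<length cs. x \<notin> insert (ys ! k) (fvars (phis ! k))"
    and "\<forall>k<length cs. \<forall>k'<length cs. k \<noteq> k' \<longrightarrow>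
          insert (ys ! k) (fvars (phis ! k)) \<inter> insert (ys ! k') (fvars (phis ! k')) = {}"
    and k: "k < length cs"
  shows "subf (\<Union>k<length cs. insert (EA (cs ! k) x (ys ! k)) (phis ! k)) (ys ! k) = phis ! k"
proof -
  let ?U = "\<Union>k<length cs. insert (EA (cs ! k) x (ys ! k)) (phis ! k)"
  let ?V = "insert (ys ! k) (fvars (phis ! k))"
  have nx: "x \<notin> ?V" using assms(2)[rule_format, OF k] .
  have "subf ?U (ys ! k) = subf (phis ! k) (ys ! k)"
  proof (rule subf_local[where V="?V"])
    show "phis ! k \<subseteq> ?U" using k by (auto intro: UN_ltI)
    show "\<forall>c a b. EA c a b \<in> ?U \<longrightarrow> a \<in> ?V \<longrightarrow> b \<in> ?V \<and> EA c a b \<in> phis ! k"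
    proof (intro allI impI)
      fix c a b assume e: "EA c a b \<in> ?U" and a: "a \<in> ?V"
      from e obtain k' where k': "k' < length cs" "EA c a b \<in> insert (EA (cs ! k') x (ys ! k')) (phis ! k')"
        by (rule UN_ltE)
      show "b \<in> ?V \<and> EA c a b \<in> phis ! k"
      proof (cases "EA c a b = EA (cs ! k') x (ys ! k')")
        case True then have "a = x" by simp
        then show ?thesis using a nx by simp
      next
        case False
        then have e': "EA c a b \<in> phis ! k'" using k'(2) insert_not by metis
        have "k' = k"
        proof (rule ccontr)
          assume "k' \<noteq> k"
          then have "?V \<inter> insert (ys ! k') (fvars (phis ! k')) = {}" using assms(3) k k'(1) by blast
          moreover have "a \<in> fvars (phis ! k')" using e' by (rule EA_fvars[THEN conjunct1])
          ultimately show False using a by blast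
        qed
        then show ?thesis using e' EA_fvars[OF e'] by simp
      qed
    qed
    show "\<forall>a\<in>?U. atom_terms a \<subseteq> ?V \<longrightarrow> a \<in> phis ! k"
    proof (intro ballI impI)
      fix a assume a: "a \<in> ?U" "atom_terms a \<subseteq> ?V"
      from a(1) obtain k' where k': "k' < length cs" "a \<in> insert (EA (cs ! k') x (ys ! k')) (phis ! k')"
        by (rule UN_ltE)
      show "a \<in> phis ! k"
      proof (cases "a = EA (cs ! k') x (ys ! k')")
        case True then have "x \<in> atom_terms a" by simp
        then show ?thesis using a(2) nx by blast
      next
        case False
        then have e': "a \<in> phis ! k'" using k'(2) insert_not by metis
        have "k' = k"
        proof (rule ccontr)
          assume "k' \<noteq> k"
          then have "?V \<inter> insert (ys ! k') (fvars (phis ! k')) = {}" using assms(3) k k'(1) by blast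
          moreover obtain z where z: "z \<in> atom_terms a" by (rule neE[OF atom_terms_ne])
          moreover have "z \<in> fvars (phis ! k')" using fvarsI[OF e' z] .
          ultimately show False using a(2) by blast
        qed
        then show ?thesis using e' by simp
      qed
    qed
  qed simp
  also have "\<dots> = phis ! k" using subf_self assms(1) k by blast
  finally show ?thesis .
qed

lemma sat_empty: "sat D {} z u" by (auto simp: sat_def)

lemma sat_mono: "\<psi> \<subseteq> \<phi> \<Longrightarrow> sat D \<phi> z u \<Longrightarrow> sat D \<psi> z u"
  by (auto simp: sat_def)

lemma sat_union:
  assumes "fvars A \<inter> fvars B \<subseteq> {x}"
  shows "sat D (A \<union> B) x t \<longleftrightarrow> sat D A x t \<and> sat D B x t"
proof
  assume "sat D (A \<union> B) x t" then show "sat D A x t \<and> sat D B x t"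
    using sat_mono[of A "A \<union> B" D x t] sat_mono[of B "A \<union> B" D x t] by simp
next
  assume "sat D A x t \<and> sat D B x t"
  then obtain \<nu>1 \<nu>2 where n1: "\<nu>1 x = t" "subst_atom \<nu>1 ` A \<subseteq> D"
    and n2: "\<nu>2 x = t" "subst_atom \<nu>2 ` B \<subseteq> D" by (auto simp: sat_def)
  define \<nu> where "\<nu> z = (if z \<in> fvars A then \<nu>1 z else \<nu>2 z)" for z
  have "\<nu> x = t" using n1 n2 by (simp add: \<nu>_def)
  moreover have "subst_atom \<nu> ` (A \<union> B) \<subseteq> D"
  proof
    fix b assume "b \<in> subst_atom \<nu> ` (A \<union> B)"
    then obtain a where a: "a \<in> A \<union> B" "b = subst_atom \<nu> a" by blast
    show "b \<in> D"
    proof (cases "a \<in> A")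
      case True
      have "subst_atom \<nu> a = subst_atom \<nu>1 a"
        by (rule subst_cong) (use fvarsI[OF True] in \<open>simp add: \<nu>_def\<close>)
      then show ?thesis using a n1(2) True by auto
    next
      case False
      then have aB: "a \<in> B" using a by blast
      have "subst_atom \<nu> a = subst_atom \<nu>2 a"
      proof (rule subst_cong)
        fix z assume z: "z \<in> atom_terms a"
        then have "z \<in> fvars B" by (rule fvarsI[OF aB])
        then show "\<nu> z = \<nu>2 z" using assms n1(1) n2(1) by (auto simp: \<nu>_def)
      qed
      then show ?thesis using a n2(2) aB by auto
    qed
  qed
  ultimately show "sat D (A \<union> B) x t" by (auto simp: sat_def)
qed

definition RHS :: "('col, 'c) atom set \<Rightarrow> 'col formula \<Rightarrow> nat \<Rightarrow> 'c \<Rightarrow> bool" where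
  "RHS D \<phi> x t \<longleftrightarrow> (\<forall>j. UA j x \<in> \<phi> \<longrightarrow> UA j t \<in> D) \<and>
     (\<forall>c y. EA c x y \<in> \<phi> \<longrightarrow> (\<exists>u. EA c t u \<in> D \<and> sat D (subf \<phi> y) y u))"

lemma RHS_conj:
  assumes "tree_like \<delta> x \<phi>1" "tree_like \<delta> x \<phi>2" "fvars \<phi>1 \<inter> fvars \<phi>2 \<subseteq> {x}"
  shows "RHS D (\<phi>1 \<union> \<phi>2) x t \<longleftrightarrow> RHS D \<phi>1 x t \<and> RHS D \<phi>2 x t"
proof -
  have s1: "subf (\<phi>1 \<union> \<phi>2) y = subf \<phi>1 y" if "EA c x y \<in> \<phi>1" for c y
    using subf_conj[OF assms(1) assms(3) that] .
  have s2: "subf (\<phi>1 \<union> \<phi>2) y = subf \<phi>2 y" if "EA c x y \<in> \<phi>2" for c y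
    using subf_conj[OF assms(2) _ that, of \<phi>1] assms(3) by (simp add: Un_commute Int_commute)
  let ?E = "\<lambda>\<psi> c y. \<exists>u. EA c t u \<in> D \<and> sat D \<psi> y u"
  have P1: "(\<forall>j. UA j x \<in> \<phi>1 \<union> \<phi>2 \<longrightarrow> UA j t \<in> D) \<longleftrightarrow>
     (\<forall>j. UA j x \<in> \<phi>1 \<longrightarrow> UA j t \<in> D) \<and> (\<forall>j. UA j x \<in> \<phi>2 \<longrightarrow> UA j t \<in> D)" by blast
  have P2: "(\<forall>c y. EA c x y \<in> \<phi>1 \<union> \<phi>2 \<longrightarrow> ?E (subf (\<phi>1 \<union> \<phi>2) y) c y) \<longleftrightarrow>
     (\<forall>c y. EA c x y \<in> \<phi>1 \<longrightarrow> ?E (subf \<phi>1 y) c y) \<and> (\<forall>c y. EA c x y \<in> \<phi>2 \<longrightarrow> ?E (subf \<phi>2 y) c y)"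
  proof (intro iffI conjI allI impI)
    fix c y assume h: "\<forall>c y. EA c x y \<in> \<phi>1 \<union> \<phi>2 \<longrightarrow> ?E (subf (\<phi>1 \<union> \<phi>2) y) c y"
    { assume e: "EA c x y \<in> \<phi>1" then show "?E (subf \<phi>1 y) c y" using h s1[OF e] by force }
    { assume e: "EA c x y \<in> \<phi>2" then show "?E (subf \<phi>2 y) c y" using h s2[OF e] by force }
  next
    fix c y assume h: "(\<forall>c y. EA c x y \<in> \<phi>1 \<longrightarrow> ?E (subf \<phi>1 y) c y) \<and> (\<forall>c y. EA c x y \<in> \<phi>2 \<longrightarrow> ?E (subf \<phi>2 y) c y)"
      and e: "EA c x y \<in> \<phi>1 \<union> \<phi>2"
    show "?E (subf (\<phi>1 \<union> \<phi>2) y) c y"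
    proof (cases "EA c x y \<in> \<phi>1")
      case True then show ?thesis using h s1[OF True] by simp
    next
      case False then have e2: "EA c x y \<in> \<phi>2" using e by simp
      then show ?thesis using h s2[OF e2] by simp
    qed
  qed
  show ?thesis unfolding RHS_def using P1 P2 by blast
qed

lemma sat_edges:
  assumes nx: "\<forall>k<length cs. x \<notin> insert (ys ! k) (fvars (phis ! k))"
    and dj: "\<forall>k<length cs. \<forall>k'<length cs. k \<noteq> k' \<longrightarrow>
          insert (ys ! k) (fvars (phis ! k)) \<inter> insert (ys ! k') (fvars (phis ! k')) = {}"
  shows "sat D (\<Union>k<length cs. insert (EA (cs ! k) x (ys ! k)) (phis ! k)) x t \<longleftrightarrow>
     (\<forall>k<length cs. \<exists>u. EA (cs ! k) t u \<in> D \<and> sat D (phis ! k) (ys ! k) u)"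
    (is "sat D ?U x t \<longleftrightarrow> _")
proof
  assume "sat D ?U x t"
  then obtain \<nu> where n: "\<nu> x = t" "subst_atom \<nu> ` ?U \<subseteq> D" by (auto simp: sat_def)
  show "\<forall>k<length cs. \<exists>u. EA (cs ! k) t u \<in> D \<and> sat D (phis ! k) (ys ! k) u"
  proof (intro allI impI)
    fix k assume k: "k < length cs"
    have e: "EA (cs ! k) x (ys ! k) \<in> ?U" using k by (rule UN_ltI) simp
    have "phis ! k \<subseteq> ?U" using k by (auto intro: UN_ltI)
    then have "subst_atom \<nu> ` (phis ! k) \<subseteq> D" using n(2) by (meson image_mono order_trans)
    then have "sat D (phis ! k) (ys ! k) (\<nu> (ys ! k))" unfolding sat_def by blast
    moreover have "EA (cs ! k) t (\<nu> (ys ! k)) \<in> D" using n e by force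
    ultimately show "\<exists>u. EA (cs ! k) t u \<in> D \<and> sat D (phis ! k) (ys ! k) u" by blast
  qed
next
  assume h: "\<forall>k<length cs. \<exists>u. EA (cs ! k) t u \<in> D \<and> sat D (phis ! k) (ys ! k) u"
  have "\<forall>k. \<exists>\<nu>. k < length cs \<longrightarrow> EA (cs ! k) t (\<nu> (ys ! k)) \<in> D \<and> subst_atom \<nu> ` (phis ! k) \<subseteq> D"
    using h by (auto simp: sat_def)
  then have "\<exists>N. \<forall>k. k < length cs \<longrightarrow> EA (cs ! k) t (N k (ys ! k)) \<in> D \<and> subst_atom (N k) ` (phis ! k) \<subseteq> D"
    by (rule choice)
  then obtain N where N: "\<And>k. k < length cs \<Longrightarrow> EA (cs ! k) t (N k (ys ! k)) \<in> D"
    "\<And>k. k < length cs \<Longrightarrow> subst_atom (N k) ` (phis ! k) \<subseteq> D" by blast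
  define K where "K z = (SOME k. k < length cs \<and> z \<in> insert (ys ! k) (fvars (phis ! k)))" for z
  have Kk: "K z = k" if "k < length cs" "z \<in> insert (ys ! k) (fvars (phis ! k))" for k z
    unfolding K_def
  proof (rule some_equality)
    show "k < length cs \<and> z \<in> insert (ys ! k) (fvars (phis ! k))" using that by blast
    fix k' assume k': "k' < length cs \<and> z \<in> insert (ys ! k') (fvars (phis ! k'))"
    show "k' = k"
    proof (rule ccontr)
      assume "k' \<noteq> k"
      then have "insert (ys ! k') (fvars (phis ! k')) \<inter> insert (ys ! k) (fvars (phis ! k)) = {}"
        using dj k' that(1) by blast
      then show False using k' that(2) by blast
    qed
  qed
  define \<nu> where "\<nu> z = (if z = x then t else N (K z) z)" for z
  have "subst_atom \<nu> ` ?U \<subseteq> D"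
  proof
    fix b assume "b \<in> subst_atom \<nu> ` ?U"
    then obtain a where a: "a \<in> ?U" "b = subst_atom \<nu> a" by blast
    from a(1) obtain k where k: "k < length cs" "a \<in> insert (EA (cs ! k) x (ys ! k)) (phis ! k)"
      by (rule UN_ltE)
    have nxk: "x \<notin> insert (ys ! k) (fvars (phis ! k))" using nx k(1) by blast
    show "b \<in> D"
    proof (cases "a = EA (cs ! k) x (ys ! k)")
      case True
      have "ys ! k \<noteq> x" using nxk by auto
      then have "\<nu> (ys ! k) = N k (ys ! k)" using Kk[OF k(1)] by (simp add: \<nu>_def)
      then have "b = EA (cs ! k) t (N k (ys ! k))" using a(2) True by (simp add: \<nu>_def)
      then show ?thesis using N(1)[OF k(1)] by simp
    next
      case False
      then have ap: "a \<in> phis ! k" using k(2) insert_not by metis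
      have "subst_atom \<nu> a = subst_atom (N k) a"
      proof (rule subst_cong)
        fix z assume "z \<in> atom_terms a"
        then have "z \<in> fvars (phis ! k)" by (rule fvarsI[OF ap])
        then show "\<nu> z = N k z" using nxk Kk[OF k(1)] by (auto simp: \<nu>_def)
      qed
      then show ?thesis using a(2) N(2)[OF k(1)] ap by auto
    qed
  qed
  moreover have "\<nu> x = t" by (simp add: \<nu>_def)
  ultimately show "sat D ?U x t" by (auto simp: sat_def)
qed

lemma RHS_edges:
  assumes tl: "\<forall>k<length cs. tree_like \<delta> (ys ! k) (phis ! k)"
    and nx: "\<forall>k<length cs. x \<notin> insert (ys ! k) (fvars (phis ! k))"
    and dj: "\<forall>k<length cs. \<forall>k'<length cs. k \<noteq> k' \<longrightarrow>
          insert (ys ! k) (fvars (phis ! k)) \<inter> insert (ys ! k') (fvars (phis ! k')) = {}"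
  shows "RHS D (\<Union>k<length cs. insert (EA (cs ! k) x (ys ! k)) (phis ! k)) x t \<longleftrightarrow>
     (\<forall>k<length cs. \<exists>u. EA (cs ! k) t u \<in> D \<and> sat D (phis ! k) (ys ! k) u)"
    (is "RHS D ?U x t \<longleftrightarrow> _")
proof
  assume h: "RHS D ?U x t"
  show "\<forall>k<length cs. \<exists>u. EA (cs ! k) t u \<in> D \<and> sat D (phis ! k) (ys ! k) u"
  proof (intro allI impI)
    fix k assume k: "k < length cs"
    have e: "EA (cs ! k) x (ys ! k) \<in> ?U" using k by (rule UN_ltI) simp
    have "\<forall>c y. EA c x y \<in> ?U \<longrightarrow> (\<exists>u. EA c t u \<in> D \<and> sat D (subf ?U y) y u)"
      using h unfolding RHS_def by (rule conjunct2)
    then have "\<exists>u. EA (cs ! k) t u \<in> D \<and> sat D (subf ?U (ys ! k)) (ys ! k) u" using e by blast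
    then show "\<exists>u. EA (cs ! k) t u \<in> D \<and> sat D (phis ! k) (ys ! k) u"
      unfolding subf_edges[OF tl nx dj k] .
  qed
next
  assume h: "\<forall>k<length cs. \<exists>u. EA (cs ! k) t u \<in> D \<and> sat D (phis ! k) (ys ! k) u"
  have nUA: "UA j x \<notin> ?U" for j
  proof
    assume "UA j x \<in> ?U"
    then obtain k where k: "k < length cs" "UA j x \<in> insert (EA (cs ! k) x (ys ! k)) (phis ! k)"
      by (rule UN_ltE)
    then have "UA j x \<in> phis ! k" by simp
    then have "x \<in> fvars (phis ! k)" by (rule UA_fvars)
    then show False using nx k(1) by blast
  qed
  have "\<exists>u. EA c t u \<in> D \<and> sat D (subf ?U y) y u" if e: "EA c x y \<in> ?U" for c y
  proof -
    from e obtain k where k: "k < length cs" "EA c x y \<in> insert (EA (cs ! k) x (ys ! k)) (phis ! k)"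
      by (rule UN_ltE)
    have nxk: "x \<notin> insert (ys ! k) (fvars (phis ! k))" using nx k(1) by blast
    have "EA c x y = EA (cs ! k) x (ys ! k)"
    proof (rule ccontr)
      assume "EA c x y \<noteq> EA (cs ! k) x (ys ! k)"
      then have "EA c x y \<in> phis ! k" using k(2) insert_not by metis
      then have "x \<in> fvars (phis ! k)" by (rule EA_fvars[THEN conjunct1])
      then show False using nxk by blast
    qed
    then have "c = cs ! k" "y = ys ! k" by simp_all
    then show ?thesis using h k(1) subf_edges[OF tl nx dj k(1)] by simp
  qed
  then show "RHS D ?U x t" using nUA unfolding RHS_def by blast
qed

lemma DEC: "tree_like \<delta> x \<phi> \<Longrightarrow> sat D \<phi> x t \<longleftrightarrow> RHS D \<phi> x t"
proof (induction arbitrary: t rule: tree_like.induct)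
  case (tl_top \<delta> x)
  then show ?case by (simp add: sat_empty RHS_def)
next
  case (tl_unary j \<delta> x)
  then show ?case by (auto simp: sat_def RHS_def)
next
  case (tl_conj \<delta> x \<phi>1 \<phi>2)
  have "sat D (\<phi>1 \<union> \<phi>2) x t = (sat D \<phi>1 x t \<and> sat D \<phi>2 x t)" by (rule sat_union[OF tl_conj.hyps(3)])
  also have "\<dots> = (RHS D \<phi>1 x t \<and> RHS D \<phi>2 x t)" using tl_conj.IH by simp
  also have "\<dots> = RHS D (\<phi>1 \<union> \<phi>2) x t" by (rule RHS_conj[OF tl_conj.hyps(1,2,3), symmetric])
  finally show ?case .
next
  case (tl_edges ys cs phis \<delta> x)
  have tl: "\<forall>k<length cs. tree_like \<delta> (ys ! k) (phis ! k)" using tl_edges.IH by blast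
  show ?case by (simp only: sat_edges[OF tl_edges.hyps(4,5)] RHS_edges[OF tl tl_edges.hyps(4,5)])
qed

lemma child_tl: "tree_like \<delta> x \<phi> \<Longrightarrow> EA c x y \<in> \<phi> \<Longrightarrow> tree_like \<delta> y (subf \<phi> y)"
proof (induction rule: tree_like.induct)
  case (tl_conj \<delta> x \<phi>1 \<phi>2)
  show ?case
  proof (cases "EA c x y \<in> \<phi>1")
    case True then show ?thesis using tl_conj subf_conj[OF tl_conj.hyps(1,3) True] by simp
  next
    case False then have e2: "EA c x y \<in> \<phi>2" using tl_conj.prems by simp
    have "subf (\<phi>1 \<union> \<phi>2) y = subf \<phi>2 y"
      using subf_conj[OF tl_conj.hyps(2) _ e2, of \<phi>1] tl_conj.hyps(3) by (simp add: Un_commute Int_commute)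
    then show ?thesis using tl_conj.IH(2) e2 by simp
  qed
next
  case (tl_edges ys cs phis \<delta> x)
  have tl: "\<forall>k<length cs. tree_like \<delta> (ys ! k) (phis ! k)" using tl_edges.IH by blast
  from tl_edges.prems obtain k where k: "k < length cs" "EA c x y \<in> insert (EA (cs ! k) x (ys ! k)) (phis ! k)"
    by (rule UN_ltE)
  have nxk: "x \<notin> insert (ys ! k) (fvars (phis ! k))" using tl_edges.hyps(4) k(1) by blast
  have "EA c x y = EA (cs ! k) x (ys ! k)"
  proof (rule ccontr)
    assume "EA c x y \<noteq> EA (cs ! k) x (ys ! k)"
    then have "EA c x y \<in> phis ! k" using k(2) insert_not by metis
    then have "x \<in> fvars (phis ! k)" by (rule EA_fvars[THEN conjunct1])
    then show False using nxk by blast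
  qed
  then have "y = ys ! k" by simp
  then show ?case using subf_edges[OF tl tl_edges.hyps(4,5) k(1)] tl k(1) by simp
qed simp_all

lemma tl_rename: "tree_like \<delta> y \<psi> \<Longrightarrow> inj h \<Longrightarrow> tree_like \<delta> (h y) (subst_atom h ` \<psi>)"
proof (induction rule: tree_like.induct)
  case (tl_top \<delta> x)
  then show ?case by (simp add: tree_like.tl_top)
next
  case (tl_unary j \<delta> x)
  then show ?case by (simp add: tree_like.tl_unary)
next
  case (tl_conj \<delta> x \<phi>1 \<phi>2)
  have "fvars (subst_atom h ` \<phi>1) \<inter> fvars (subst_atom h ` \<phi>2) = h ` (fvars \<phi>1 \<inter> fvars \<phi>2)"
    by (simp add: fvars_image image_Int[OF tl_conj.prems])
  also have "\<dots> \<subseteq> {h x}" using tl_conj.hyps(3) by blast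
  finally show ?case using tl_conj.IH tl_conj.prems by (simp add: image_Un tree_like.tl_conj)
next
  case (tl_edges ys cs phis \<delta> x)
  let ?ys = "map h ys" and ?phis = "map (\<lambda>p. subst_atom h ` p) phis"
  have eq: "subst_atom h ` (\<Union>k<length cs. insert (EA (cs ! k) x (ys ! k)) (phis ! k)) =
     (\<Union>k<length cs. insert (EA (cs ! k) (h x) (?ys ! k)) (?phis ! k))"
    using tl_edges.hyps(1,2) by (simp add: image_UN)
  have "tree_like \<delta> (h x) (\<Union>k<length cs. insert (EA (cs ! k) (h x) (?ys ! k)) (?phis ! k))"
  proof (rule tree_like.tl_edges)
    show "length ?ys = length cs" "length ?phis = length cs" using tl_edges.hyps(1,2) by simp_all
    show "distinct ?ys" using tl_edges.hyps(3) tl_edges.prems by (simp add: distinct_map inj_on_subset[of h UNIV])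
    show "\<forall>k<length cs. tree_like \<delta> (?ys ! k) (?phis ! k)"
      using tl_edges.IH tl_edges.prems tl_edges.hyps(1,2) by simp
    show "\<forall>k<length cs. h x \<notin> insert (?ys ! k) (fvars (?phis ! k))"
    proof (intro allI impI)
      fix k assume k: "k < length cs"
      have "x \<notin> insert (ys ! k) (fvars (phis ! k))" using tl_edges.hyps(4) k by blast
      then have "h x \<notin> h ` insert (ys ! k) (fvars (phis ! k))" using tl_edges.prems by (simp add: inj_image_mem_iff inj_eq)
      then show "h x \<notin> insert (?ys ! k) (fvars (?phis ! k))" using k tl_edges.hyps(1,2) by (simp add: fvars_image)
    qed
    show "\<forall>k<length cs. \<forall>k'<length cs. k \<noteq> k' \<longrightarrow>
          insert (?ys ! k) (fvars (?phis ! k)) \<inter> insert (?ys ! k') (fvars (?phis ! k')) = {}"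
    proof (intro allI impI)
      fix k k' assume k: "k < length cs" "k' < length cs" "k \<noteq> k'"
      have "insert (ys ! k) (fvars (phis ! k)) \<inter> insert (ys ! k') (fvars (phis ! k')) = {}"
        using tl_edges.hyps(5) k by blast
      then have "h ` (insert (ys ! k) (fvars (phis ! k)) \<inter> insert (ys ! k') (fvars (phis ! k'))) = {}"
        by (simp only: image_empty)
      then have "h ` insert (ys ! k) (fvars (phis ! k)) \<inter> h ` insert (ys ! k') (fvars (phis ! k')) = {}"
        by (simp only: image_Int[OF tl_edges.prems])
      then show "insert (?ys ! k) (fvars (?phis ! k)) \<inter> insert (?ys ! k') (fvars (?phis ! k')) = {}"
        using k tl_edges.hyps(1,2) by (simp add: fvars_image)
    qed
  qed
  then show ?case unfolding eq .
qed

lemma root_unique: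
  assumes "tree_like \<delta> y \<psi>1" "tree_like \<delta>2 x \<psi>2" "inj h" "subst_atom h ` \<psi>1 = \<psi>2" "\<psi>1 \<noteq> {}"
  shows "h y = x"
proof (rule ccontr)
  assume ne: "h y \<noteq> x"
  have "y \<in> fvars \<psi>1" using tl_root_in[OF assms(1,5)] .
  then have "h y \<in> fvars \<psi>2" using assms(4) fvars_image by blast
  then obtain c a where e: "EA c a (h y) \<in> \<psi>2" using tl_T2[OF assms(2)] ne by blast
  then have "EA c a (h y) \<in> subst_atom h ` \<psi>1" using assms(4) by simp
  then obtain b where b: "b \<in> \<psi>1" "subst_atom h b = EA c a (h y)" by (metis imageE)
  then obtain a' y' where "b = EA c a' y'" "h y' = h y" by (cases b) auto
  then have "EA c a' y \<in> \<psi>1" using b(1) injD[OF assms(3)] by metis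
  then show False using tl_T1[OF assms(1)] by blast
qed

lemma sat_rename:
  assumes "bij h" "subst_atom h ` \<psi>1 = \<psi>2" "\<psi>1 = {} \<or> h y = x"
  shows "sat D \<psi>1 y u \<longleftrightarrow> sat D \<psi>2 x u"
proof (cases "\<psi>1 = {}")
  case True then show ?thesis using assms(2) by (simp add: sat_empty)
next
  case False
  then have hy: "h y = x" using assms(3) by blast
  show ?thesis
  proof
    assume "sat D \<psi>1 y u"
    then obtain \<nu> where n: "\<nu> y = u" "subst_atom \<nu> ` \<psi>1 \<subseteq> D" by (auto simp: sat_def)
    have "(\<nu> \<circ> inv h) x = u" using n(1) hy bij_inv_eq_iff[OF assms(1)] by (metis comp_apply)
    moreover have "subst_atom (\<nu> \<circ> inv h) ` \<psi>2 = subst_atom \<nu> ` \<psi>1"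
    proof -
      have "subst_atom (\<nu> \<circ> inv h) ` \<psi>2 = subst_atom \<nu> ` (subst_atom (inv h) ` (subst_atom h ` \<psi>1))"
        using assms(2) by (simp add: image_image subst_comp)
      then show ?thesis unfolding rename_back[OF assms(1)] .
    qed
    ultimately show "sat D \<psi>2 x u" using n(2) unfolding sat_def by (metis order_refl)
  next
    assume "sat D \<psi>2 x u"
    then obtain \<nu> where n: "\<nu> x = u" "subst_atom \<nu> ` \<psi>2 \<subseteq> D" by (auto simp: sat_def)
    have "(\<nu> \<circ> h) y = u" using n(1) hy by simp
    moreover have "subst_atom (\<nu> \<circ> h) ` \<psi>1 = subst_atom \<nu> ` \<psi>2"
      using assms(2) by (auto simp: image_image subst_comp)
    ultimately show "sat D \<psi>1 y u" using n(2) unfolding sat_def by (metis order_refl)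
  qed
qed

lemma chain_rename: "chain_to A n z \<Longrightarrow> chain_to (subst_atom g ` A) n (g z)"
proof (induction rule: chain_to.induct)
  case (1 \<phi> y) then show ?case by (rule chain_to.intros)
next
  case (2 \<phi> n y c z)
  have "EA c (g y) (g z) \<in> subst_atom g ` \<phi>" by (rule image_eqI[OF _ 2(2)]) simp
  then show ?case using 2(3) by (rule chain_to.intros(2)[rotated])
qed

lemma chain_rename_iff: "bij h \<Longrightarrow> chain_to (subst_atom h ` A) n (h z) \<longleftrightarrow> chain_to A n z"
proof
  assume b: "bij h" and c: "chain_to (subst_atom h ` A) n (h z)"
  have "chain_to (subst_atom (inv h) ` (subst_atom h ` A)) n (inv h (h z))" using c by (rule chain_rename)
  then show "chain_to A n z" unfolding rename_back[OF b] inv_f_f[OF bij_is_inj[OF b]] .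
qed (rule chain_rename)

lemma chain_mono: "chain_to A n z \<Longrightarrow> A \<subseteq> B \<Longrightarrow> chain_to B n z"
proof (induction rule: chain_to.induct)
  case (1 \<phi> y) show ?case by (rule chain_to.intros(1))
next
  case (2 \<phi> n y c z) then show ?case by (meson chain_to.intros(2) subsetD)
qed

lemma chain_fvars: "chain_to A n z \<Longrightarrow> n = 0 \<or> z \<in> fvars A"
proof (induction rule: chain_to.induct)
  case (2 \<phi> n y c z) then show ?case using EA_fvars by metis
qed simp

lemma chain_edge: "EA c a b \<in> A \<Longrightarrow> chain_to A (Suc 0) b"
  by (rule chain_to.intros(2)[OF chain_to.intros(1)])

lemma chain_0: "chain_to A 0 z" by (rule chain_to.intros(1))

definition bnd :: "'col formula \<Rightarrow> nat \<Rightarrow> bool" where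
  "bnd A d \<longleftrightarrow> (\<forall>z\<in>fvars A. \<forall>n. chain_to A n z \<longrightarrow> n \<le> d)"

lemma bnd_all: "bnd A d \<Longrightarrow> chain_to A n z \<Longrightarrow> n \<le> d"
  unfolding bnd_def using chain_fvars by fastforce

lemma var_depth_ge: "bnd A d \<Longrightarrow> chain_to A n z \<Longrightarrow> n \<le> var_depth A z"
  unfolding var_depth_def by (rule Greatest_le_nat) (auto dest: bnd_all)

lemma var_depth_chain: "bnd A d \<Longrightarrow> chain_to A (var_depth A z) z"
  unfolding var_depth_def by (rule GreatestI_nat[of _ 0]) (auto dest: bnd_all intro: chain_0)

lemma finite_atom_terms: "finite (atom_terms a)" by (cases a) auto

lemma fvars_finite: "finite A \<Longrightarrow> finite (fvars A)"
  unfolding fvars_def using finite_atom_terms by blast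

lemma fdepth_le:
  assumes "finite A" "bnd A d"
  shows "fdepth A \<le> k \<longleftrightarrow> (\<forall>n z. chain_to A n z \<longrightarrow> n \<le> k)"
proof -
  have fin: "finite (insert 0 (var_depth A ` fvars A))"
    using fvars_finite[OF assms(1)] by simp
  show ?thesis
  proof
    assume h: "fdepth A \<le> k"
    show "\<forall>n z. chain_to A n z \<longrightarrow> n \<le> k"
    proof (intro allI impI)
      fix n z assume c: "chain_to A n z"
      show "n \<le> k"
      proof (cases "n = 0")
        case False
        then have "z \<in> fvars A" using chain_fvars[OF c] by simp
        then have "var_depth A z \<le> fdepth A" unfolding fdepth_def using fin by (simp add: Max_ge)
        then show ?thesis using var_depth_ge[OF assms(2) c] h by simp
      qed simp
    qed
  next
    assume h: "\<forall>n z. chain_to A n z \<longrightarrow> n \<le> k"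
    show "fdepth A \<le> k" unfolding fdepth_def
      using fin h var_depth_chain[OF assms(2)] by (subst Max_le_iff) auto
  qed
qed

lemma EA_image: "EA c a' b' \<in> subst_atom h ` A \<longleftrightarrow> (\<exists>a b. EA c a b \<in> A \<and> a' = h a \<and> b' = h b)"
proof
  assume "EA c a' b' \<in> subst_atom h ` A"
  then obtain t where t: "t \<in> A" "EA c a' b' = subst_atom h t" by (rule imageE)
  then show "\<exists>a b. EA c a b \<in> A \<and> a' = h a \<and> b' = h b" by (cases t) auto
next
  assume "\<exists>a b. EA c a b \<in> A \<and> a' = h a \<and> b' = h b"
  then obtain a b where "EA c a b \<in> A" "a' = h a" "b' = h b" by blast
  then show "EA c a' b' \<in> subst_atom h ` A" by (intro image_eqI[of _ _ "EA c a b"]) simp_all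
qed

lemma fanout_rename:
  assumes "bij h" shows "fanout (subst_atom h ` A) (h z) = fanout A z"
proof -
  have inj: "inj h" using assms bij_is_inj by blast
  have "{w. \<exists>c. EA c (h z) w \<in> subst_atom h ` A} = h ` {w. \<exists>c. EA c z w \<in> A}"
  proof
    show "{w. \<exists>c. EA c (h z) w \<in> subst_atom h ` A} \<subseteq> h ` {w. \<exists>c. EA c z w \<in> A}"
    proof
      fix w assume "w \<in> {w. \<exists>c. EA c (h z) w \<in> subst_atom h ` A}"
      then obtain c a b where "EA c a b \<in> A" "h z = h a" "w = h b" unfolding EA_image by blast
      then show "w \<in> h ` {w. \<exists>c. EA c z w \<in> A}" using injD[OF inj] by blast
    qed
    show "h ` {w. \<exists>c. EA c z w \<in> A} \<subseteq> {w. \<exists>c. EA c (h z) w \<in> subst_atom h ` A}"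
      unfolding EA_image by blast
  qed
  then show ?thesis unfolding fanout_def using card_image[OF inj_on_subset[OF inj]] by simp
qed

lemma var_depth_rename: "bij h \<Longrightarrow> var_depth (subst_atom h ` A) (h z) = var_depth A z"
  unfolding var_depth_def by (simp add: chain_rename_iff)

lemma dftree_rename:
  assumes "bij h" "dftree \<delta> d f y A"
  shows "dftree \<delta> d f (h y) (subst_atom h ` A)"
  unfolding dftree_def
proof (intro conjI ballI allI impI)
  show "tree_like \<delta> (h y) (subst_atom h ` A)"
    using tl_rename assms bij_is_inj unfolding dftree_def by blast
  fix w assume "w \<in> fvars (subst_atom h ` A)"
  then obtain z where z: "z \<in> fvars A" "w = h z" unfolding fvars_image by blast
  {
    fix n assume "chain_to (subst_atom h ` A) n w"
    then have "chain_to (subst_atom h ` A) n (h z)" using z(2) by simp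
    then have "chain_to A n z" by (rule chain_rename_iff[OF assms(1), THEN iffD1])
    then show "n \<le> d" using assms(2) z(1) unfolding dftree_def by blast
  }
  show "fanout (subst_atom h ` A) w \<le> f * (d - var_depth (subst_atom h ` A) w)"
    using assms(2) z unfolding dftree_def by (simp add: fanout_rename[OF assms(1)] var_depth_rename[OF assms(1)])
qed

definition sw :: "nat \<Rightarrow> nat \<Rightarrow> nat \<Rightarrow> nat" where
  "sw a b z = (if z = a then b else if z = b then a else z)"

lemma sw_bij: "bij (sw a b)"
proof -
  have "sw a b \<circ> sw a b = id" by (auto simp: sw_def fun_eq_iff)
  then show ?thesis using o_bij by blast
qed

lemma sw_apply: "sw x y y = x" by (simp add: sw_def)

lemma dftree_bnd: "dftree \<delta> d f x \<phi> \<Longrightarrow> bnd \<phi> d"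
  by (auto simp: dftree_def bnd_def)

lemma dftree_tl: "dftree \<delta> d f x \<phi> \<Longrightarrow> tree_like \<delta> x \<phi>"
  by (auto simp: dftree_def)

lemma fvars_subf_reach: "z \<in> fvars (subf \<phi> y) \<Longrightarrow> reach \<phi> y z"
  by (auto simp: fvars_def subf_def)

lemma fanout_subf:
  assumes "z \<in> fvars (subf \<phi> y)" shows "fanout (subf \<phi> y) z = fanout \<phi> z"
proof -
  have r: "reach \<phi> y z" using fvars_subf_reach[OF assms] .
  have "{w. \<exists>c. EA c z w \<in> subf \<phi> y} = {w. \<exists>c. EA c z w \<in> \<phi>}"
  proof
    show "{w. \<exists>c. EA c z w \<in> subf \<phi> y} \<subseteq> {w. \<exists>c. EA c z w \<in> \<phi>}" using subf_sub by blast
    show "{w. \<exists>c. EA c z w \<in> \<phi>} \<subseteq> {w. \<exists>c. EA c z w \<in> subf \<phi> y}"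
    proof
      fix w assume "w \<in> {w. \<exists>c. EA c z w \<in> \<phi>}"
      then obtain c where e: "EA c z w \<in> \<phi>" by blast
      have "reach \<phi> y w" using reach_step[OF r e] .
      then have "EA c z w \<in> subf \<phi> y" using e r by (simp add: subf_def)
      then show "w \<in> {w. \<exists>c. EA c z w \<in> subf \<phi> y}" by blast
    qed
  qed
  then show ?thesis by (simp add: fanout_def)
qed

lemma chain_sub:
  assumes e0: "EA c0 x y \<in> \<phi>"
  shows "chain_to A n z \<Longrightarrow> A = subf \<phi> y \<Longrightarrow> n = 0 \<or> chain_to \<phi> (Suc n) z"
proof (induction rule: chain_to.induct)
  case (1 A y) then show ?case by simp
next
  case (2 A n a c z)
  have ez: "EA c a z \<in> \<phi>" using 2(2) 2(4) subf_sub by blast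
  have "chain_to \<phi> (Suc n) a"
  proof (cases "n = 0")
    case True
    have "a \<in> fvars A" using 2(2) by (rule EA_fvars[THEN conjunct1])
    then have "reach \<phi> y a" using fvars_subf_reach 2(4) by blast
    then show ?thesis unfolding reach_def
    proof (cases rule: rtranclp.cases)
      case rtrancl_refl then show ?thesis using chain_edge[OF e0] True by simp
    next
      case (rtrancl_into_rtrancl b)
      then obtain c' where "EA c' b a \<in> \<phi>" by blast
      then show ?thesis using chain_edge True by metis
    qed
  next
    case False then show ?thesis using 2(3) 2(4) by blast
  qed
  then show ?case using ez by (blast intro: chain_to.intros(2))
qed

lemma child_dftree:
  assumes "dftree \<delta> d f x \<phi>" "EA c0 x y \<in> \<phi>"
  shows "dftree \<delta> d f y (subf \<phi> y)"
  unfolding dftree_def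
proof (intro conjI ballI allI impI)
  have b: "bnd \<phi> d" using dftree_bnd[OF assms(1)] .
  show "tree_like \<delta> y (subf \<phi> y)" by (rule child_tl[OF dftree_tl[OF assms(1)] assms(2)])
  have bs: "bnd (subf \<phi> y) d" unfolding bnd_def
  proof (intro ballI allI impI)
    fix z n assume "chain_to (subf \<phi> y) n z"
    then have "chain_to \<phi> n z" by (rule chain_mono[OF _ subf_sub])
    then show "n \<le> d" by (rule bnd_all[OF b])
  qed
  fix z assume z: "z \<in> fvars (subf \<phi> y)"
  {
    fix n assume "chain_to (subf \<phi> y) n z"
    then show "n \<le> d" by (rule bnd_all[OF bs])
  }
  have zf: "z \<in> fvars \<phi>" using z fvars_mono[OF subf_sub] by blast
  have "var_depth (subf \<phi> y) z \<le> var_depth \<phi> z"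
    using var_depth_ge[OF b chain_mono[OF var_depth_chain[OF bs] subf_sub]] .
  moreover have "fanout \<phi> z \<le> f * (d - var_depth \<phi> z)" using assms(1) zf unfolding dftree_def by blast
  ultimately show "fanout (subf \<phi> y) z \<le> f * (d - var_depth (subf \<phi> y) z)"
    using fanout_subf[OF z] by (metis diff_le_mono2 mult_le_mono2 order_trans)
qed

lemma unary_tl: "finite S \<Longrightarrow> (\<forall>a\<in>S. \<exists>j. a = UA j x \<and> 1 \<le> j \<and> j \<le> \<delta>) \<Longrightarrow> tree_like \<delta> x S"
proof (induction rule: finite_induct)
  case empty show ?case by (rule tl_top)
next
  case (insert a S)
  then obtain j where j: "a = UA j x" "1 \<le> j" "j \<le> \<delta>" by blast
  have "tree_like \<delta> x ({UA j x} \<union> S)"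
  proof (rule tl_conj)
    show "tree_like \<delta> x {UA j x}" using j by (intro tl_unary)
    show "tree_like \<delta> x S" using insert by blast
    show "fvars {UA j x} \<inter> fvars S \<subseteq> {x}" by (simp add: fvars_def)
  qed
  then show ?case using j by simp
qed

lemma phi0_dftree:
  assumes "tree_like \<delta> x \<phi>"
  shows "dftree \<delta> d f x (phi0 x \<phi>)" and "\<forall>n z. chain_to (phi0 x \<phi>) n z \<longrightarrow> n = 0"
proof -
  have noE: "EA c a b \<notin> phi0 x \<phi>" for c a b by (simp add: phi0_def)
  show ch: "\<forall>n z. chain_to (phi0 x \<phi>) n z \<longrightarrow> n = 0"
  proof (intro allI impI)
    fix n z assume "chain_to (phi0 x \<phi>) n z"
    then show "n = 0" by (cases rule: chain_to.cases) (use noE in auto)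
  qed
  have fin: "finite (phi0 x \<phi>)" using tl_finite[OF assms] by (simp add: phi0_def)
  have "tree_like \<delta> x (phi0 x \<phi>)"
    by (rule unary_tl[OF fin]) (use tl_T5[OF assms] in \<open>auto simp: phi0_def\<close>)
  moreover have "fanout (phi0 x \<phi>) z = 0" for z using noE by (simp add: fanout_def)
  ultimately show "dftree \<delta> d f x (phi0 x \<phi>)" using ch unfolding dftree_def by force
qed

lemma key:
  fixes a m :: "'p \<Rightarrow> real" and c0 :: real
  assumes "finite J" "\<forall>p\<in>J. a p \<in> {0,1} \<and> m p \<in> {0,1}" "c0 \<in> {0,1}"
  shows "relu (c0 + (\<Sum>p\<in>J. a p * m p) - (\<Sum>p\<in>J. a p)) = (if c0 = 1 \<and> (\<forall>p\<in>J. a p = 1 \<longrightarrow> m p = 1) then 1 else 0)"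
proof -
  define \<Delta> where "\<Delta> = (\<Sum>p\<in>J. a p * (1 - m p))"
  have eq: "c0 + (\<Sum>p\<in>J. a p * m p) - (\<Sum>p\<in>J. a p) = c0 - \<Delta>"
    unfolding \<Delta>_def by (simp add: algebra_simps sum_subtractf)
  have nn: "\<forall>p\<in>J. 0 \<le> a p * (1 - m p)" using assms(2) by auto
  show ?thesis
  proof (cases "c0 = 1 \<and> (\<forall>p\<in>J. a p = 1 \<longrightarrow> m p = 1)")
    case True
    then have "\<forall>p\<in>J. a p * (1 - m p) = 0" using assms(2) by fastforce
    then have "\<Delta> = 0" unfolding \<Delta>_def by (simp only: sum.neutral)
    then show ?thesis using True eq by (simp add: relu_def)
  next
    case False
    have "\<Delta> \<ge> 0" unfolding \<Delta>_def using nn by (simp add: sum_nonneg)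
    have "c0 - \<Delta> \<le> 0"
    proof (cases "c0 = 1")
      case True
      then obtain p where p: "p \<in> J" "a p = 1" "m p \<noteq> 1" using False by blast
      then have "m p = 0" using assms(2) by blast
      then have "a p * (1 - m p) = 1" using p by simp
      moreover have "a p * (1 - m p) \<le> \<Delta>" unfolding \<Delta>_def
        by (rule member_le_sum[OF p(1)]) (use nn in blast, rule assms(1))
      ultimately show ?thesis using True by simp
    next
      case False then have "c0 = 0" using assms(3) by simp
      then show ?thesis using \<open>\<Delta> \<ge> 0\<close> by simp
    qed
    then show ?thesis using False eq by (simp add: relu_def)
  qed
qed

lemma agg_val:
  fixes g :: "'c \<Rightarrow> nat \<Rightarrow> real"
  assumes "finite U" "\<forall>u\<in>U. g u j \<in> {0,1}"
  shows "max_agg (image_mset g (mset_set U)) j = (if \<exists>u\<in>U. g u j = 1 then 1 else 0)"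
proof (cases "U = {}")
  case True then show ?thesis by (simp add: max_agg_def)
next
  case False
  then have ne: "image_mset g (mset_set U) \<noteq> {#}" using assms(1) by (simp add: mset_set_empty_iff)
  have s: "(\<lambda>w. w j) ` set_mset (image_mset g (mset_set U)) = (\<lambda>u. g u j) ` U"
    using assms(1) by (auto simp: image_image)
  have fin: "finite ((\<lambda>u. g u j) ` U)" using assms(1) by simp
  have ne2: "(\<lambda>u. g u j) ` U \<noteq> {}" using False by simp
  show ?thesis
  proof (cases "\<exists>u\<in>U. g u j = 1")
    case True
    then obtain u where u: "u \<in> U" "g u j = 1" by blast
    have "Max ((\<lambda>u. g u j) ` U) = 1"
    proof (rule Max_eqI[OF fin])
      show "y \<le> 1" if "y \<in> (\<lambda>u. g u j) ` U" for y using that assms(2) by auto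
      show "1 \<in> (\<lambda>u. g u j) ` U" using u by force
    qed
    then show ?thesis using ne s True by (simp add: max_agg_def)
  next
    case False
    then have "\<forall>u\<in>U. g u j = 0" using assms(2) by blast
    then have "(\<lambda>u. g u j) ` U = {0}" using ne2 by auto
    then show ?thesis using ne s False by (simp add: max_agg_def)
  qed
qed

lemma tau_in: "1 \<le> i \<Longrightarrow> i \<le> length \<tau> \<Longrightarrow> tau \<tau> i \<in> set \<tau>"
  by (simp add: tau_def)

lemma enum_dftree: "tree_enum \<delta> d f x \<tau> \<Longrightarrow> 1 \<le> i \<Longrightarrow> i \<le> length \<tau> \<Longrightarrow> dftree \<delta> d f x (tau \<tau> i)"
  unfolding tree_enum_def using tau_in by blast

lemma enum_ex:
  assumes "tree_enum \<delta> d f x \<tau>" "dftree \<delta> d f x \<phi>"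
  shows "\<exists>j. 1 \<le> j \<and> j \<le> length \<tau> \<and> eq_ren \<phi> (tau \<tau> j)"
proof -
  obtain k where "k < length \<tau>" "eq_ren \<phi> (\<tau> ! k)" using assms unfolding tree_enum_def by blast
  then show ?thesis by (intro exI[of _ "Suc k"]) (simp add: tau_def)
qed

lemma enum_uniq:
  assumes "tree_enum \<delta> d f x \<tau>" "dftree \<delta> d f x \<phi>"
    and "1 \<le> j" "j \<le> length \<tau>" "eq_ren \<phi> (tau \<tau> j)"
    and "1 \<le> j'" "j' \<le> length \<tau>" "eq_ren \<phi> (tau \<tau> j')"
  shows "j = j'"
proof -
  have "\<exists>!i. i < length \<tau> \<and> eq_ren \<phi> (\<tau> ! i)" using assms(1,2) unfolding tree_enum_def by blast
  moreover have "j - 1 < length \<tau> \<and> eq_ren \<phi> (\<tau> ! (j - 1))" using assms(3-5) by (simp add: tau_def)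
  moreover have "j' - 1 < length \<tau> \<and> eq_ren \<phi> (\<tau> ! (j' - 1))" using assms(6-8) by (simp add: tau_def)
  ultimately have "j - 1 = j' - 1" by blast
  then show ?thesis using assms(3,6) by simp
qed

lemma down_closed_card:
  fixes S :: "nat set"
  assumes "finite S" "\<forall>i\<in>S. 1 \<le> i" "\<forall>i\<in>S. \<forall>i'. 1 \<le> i' \<and> i' \<le> i \<longrightarrow> i' \<in> S"
  shows "S = {1..card S}"
proof (cases "S = {}")
  case True then show ?thesis by simp
next
  case False
  let ?m = "Max S"
  have "?m \<in> S" using Max_in[OF assms(1) False] .
  have "S = {1..?m}"
  proof
    show "S \<subseteq> {1..?m}" using assms(1,2) by auto
    show "{1..?m} \<subseteq> S" using assms(3) \<open>?m \<in> S\<close> by auto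
  qed
  moreover have "card {1..?m} = ?m" by simp
  ultimately show ?thesis by metis
qed

lemma DIM:
  assumes "tree_enum \<delta> d f x \<tau>" "1 \<le> k" "k < d + 2"
  shows "(1 \<le> i \<and> i \<le> NPi_dim \<delta> d \<tau> k) \<longleftrightarrow> (1 \<le> i \<and> i \<le> length \<tau> \<and> fdepth (tau \<tau> i) \<le> k - 1)"
proof -
  define S where "S = {i. 1 \<le> i \<and> i \<le> length \<tau> \<and> fdepth (tau \<tau> i) \<le> k - 1}"
  have dim: "NPi_dim \<delta> d \<tau> k = card S" using assms(2,3) by (simp add: NPi_dim_def S_def)
  have so: "sorted (map fdepth \<tau>)" using assms(1) by (simp add: tree_enum_def)
  have "S = {1..card S}"
  proof (rule down_closed_card)
    show "finite S" unfolding S_def by simp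
    show "\<forall>i\<in>S. 1 \<le> i" unfolding S_def by simp
    show "\<forall>i\<in>S. \<forall>i'. 1 \<le> i' \<and> i' \<le> i \<longrightarrow> i' \<in> S"
    proof (intro ballI allI impI)
      fix i i' assume i: "i \<in> S" and i': "1 \<le> i' \<and> i' \<le> i"
      have l1: "i' - 1 \<le> i - 1" using i' by linarith
      have l2: "i - 1 < length \<tau>" using i unfolding S_def mem_Collect_eq by linarith
      have "fdepth (\<tau> ! (i' - 1)) \<le> fdepth (\<tau> ! (i - 1))"
        using sorted_nth_mono[OF so l1] l1 l2 by simp
      then show "i' \<in> S" using i i' by (simp add: S_def tau_def)
    qed
  qed
  then have "i \<in> S \<longleftrightarrow> 1 \<le> i \<and> i \<le> card S" by (metis atLeastAtMost_iff)
  then show ?thesis using dim by (simp add: S_def)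
qed

lemma eq_ren_chain:
  assumes "eq_ren A B" "chain_to B n w" shows "\<exists>z. chain_to A n z"
proof -
  obtain h where h: "bij h" "subst_atom h ` A = B" using assms(1) by (auto simp: eq_ren_def)
  have "w = h (inv h w)" using h(1) by (simp add: bij_is_surj surj_f_inv_f)
  then have "chain_to (subst_atom h ` A) n (h (inv h w))" using assms(2) h(2) by simp
  then show ?thesis using chain_rename_iff[OF h(1)] by blast
qed

lemma sat_phi0: "sat D (phi0 x \<phi>) x t \<longleftrightarrow> (\<forall>j. UA j x \<in> \<phi> \<longrightarrow> UA j t \<in> D)"
proof
  assume "sat D (phi0 x \<phi>) x t"
  then obtain \<nu> where n: "\<nu> x = t" "subst_atom \<nu> ` phi0 x \<phi> \<subseteq> D" by (auto simp: sat_def)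
  show "\<forall>j. UA j x \<in> \<phi> \<longrightarrow> UA j t \<in> D"
  proof (intro allI impI)
    fix j assume "UA j x \<in> \<phi>"
    then have "UA j x \<in> phi0 x \<phi>" by (simp add: phi0_def)
    then have "subst_atom \<nu> (UA j x) \<in> D" using n(2) by blast
    then show "UA j t \<in> D" using n(1) by simp
  qed
next
  assume h: "\<forall>j. UA j x \<in> \<phi> \<longrightarrow> UA j t \<in> D"
  have "subst_atom (\<lambda>_. t) ` phi0 x \<phi> \<subseteq> D" using h by (auto simp: phi0_def)
  then show "sat D (phi0 x \<phi>) x t" unfolding sat_def by (intro exI[of _ "\<lambda>_. t"]) simp
qed

lemma sat_eqren:
  assumes "tree_like \<delta> y \<psi>1" "tree_like \<delta>2 x \<psi>2" "eq_ren \<psi>1 \<psi>2"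
  shows "sat D \<psi>1 y u \<longleftrightarrow> sat D \<psi>2 x u"
proof -
  obtain h where h: "bij h" "subst_atom h ` \<psi>1 = \<psi>2" using assms(3) by (auto simp: eq_ren_def)
  have "\<psi>1 = {} \<or> h y = x" using root_unique[OF assms(1,2) bij_is_inj[OF h(1)] h(2)] by blast
  then show ?thesis by (rule sat_rename[OF h])
qed

lemma child_index:
  assumes en: "tree_enum \<delta> d f x \<tau>" and dt: "dftree \<delta> d f x \<phi>" and e: "EA c x y \<in> \<phi>"
    and dep: "fdepth \<phi> \<le> l" and l: "1 \<le> l" "l < d + 2"
  shows "\<exists>j. 1 \<le> j \<and> j \<le> NPi_dim \<delta> d \<tau> l \<and> eq_ren (subf \<phi> y) (tau \<tau> j)"
proof -
  let ?\<psi> = "subf \<phi> y"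
  have d1: "dftree \<delta> d f y ?\<psi>" by (rule child_dftree[OF dt e])
  have d2: "dftree \<delta> d f x (subst_atom (sw x y) ` ?\<psi>)"
    using dftree_rename[OF sw_bij d1] sw_apply by metis
  obtain j where j: "1 \<le> j" "j \<le> length \<tau>" "eq_ren (subst_atom (sw x y) ` ?\<psi>) (tau \<tau> j)"
    using enum_ex[OF en d2] by blast
  obtain h where h: "bij h" "subst_atom h ` (subst_atom (sw x y) ` ?\<psi>) = tau \<tau> j"
    using j(3) by (auto simp: eq_ren_def)
  have "subst_atom (h \<circ> sw x y) ` ?\<psi> = tau \<tau> j" using h(2) by (simp add: image_image subst_comp)
  moreover have "bij (h \<circ> sw x y)" using h(1) sw_bij by (rule bij_comp[rotated])
  ultimately have er: "eq_ren ?\<psi> (tau \<tau> j)" by (auto simp: eq_ren_def)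
  have dj: "dftree \<delta> d f x (tau \<tau> j)" by (rule enum_dftree[OF en j(1,2)])
  have bp: "\<forall>n z. chain_to \<phi> n z \<longrightarrow> n \<le> l"
    using fdepth_le[OF tl_finite[OF dftree_tl[OF dt]] dftree_bnd[OF dt]] dep by blast
  have "\<forall>n w. chain_to (tau \<tau> j) n w \<longrightarrow> n \<le> l - 1"
  proof (intro allI impI)
    fix n w assume "chain_to (tau \<tau> j) n w"
    then obtain z where "chain_to ?\<psi> n z" using eq_ren_chain[OF er] by blast
    then have "n = 0 \<or> chain_to \<phi> (Suc n) z" using chain_sub[OF e] by blast
    then show "n \<le> l - 1" using bp by fastforce
  qed
  then have "fdepth (tau \<tau> j) \<le> l - 1"
    using fdepth_le[OF tl_finite[OF dftree_tl[OF dj]] dftree_bnd[OF dj]] by blast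
  then have "j \<le> NPi_dim \<delta> d \<tau> l" using DIM[OF en l] j(1,2) by blast
  then show ?thesis using j(1) er by blast
qed

lemma phi0_index:
  assumes en: "tree_enum \<delta> d f x \<tau>" and tl: "tree_like \<delta> x \<phi>" and l: "1 \<le> l" "l < d + 2"
  shows "\<exists>j. 1 \<le> j \<and> j \<le> NPi_dim \<delta> d \<tau> l \<and> eq_ren (phi0 x \<phi>) (tau \<tau> j)"
proof -
  obtain j where j: "1 \<le> j" "j \<le> length \<tau>" "eq_ren (phi0 x \<phi>) (tau \<tau> j)"
    using enum_ex[OF en phi0_dftree(1)[OF tl]] by blast
  have dj: "dftree \<delta> d f x (tau \<tau> j)" by (rule enum_dftree[OF en j(1,2)])
  have "\<forall>n w. chain_to (tau \<tau> j) n w \<longrightarrow> n \<le> l - 1"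
  proof (intro allI impI)
    fix n w assume "chain_to (tau \<tau> j) n w"
    then obtain z where "chain_to (phi0 x \<phi>) n z" using eq_ren_chain[OF j(3)] by blast
    then show "n \<le> l - 1" using phi0_dftree(2)[OF tl] by fastforce
  qed
  then have "fdepth (tau \<tau> j) \<le> l - 1"
    using fdepth_le[OF tl_finite[OF dftree_tl[OF dj]] dftree_bnd[OF dj]] by blast
  then have "j \<le> NPi_dim \<delta> d \<tau> l" using DIM[OF en l] j(1,2) by blast
  then show ?thesis using j(1,3) by blast
qed

lemma new_row_sem:
  assumes en: "tree_enum \<delta> d f x \<tau>" and dt: "dftree \<delta> d f x \<phi>" and dep: "fdepth \<phi> \<le> l"
    and l: "1 \<le> l" "l < d + 2"
    and j0: "1 \<le> j0" "j0 \<le> NPi_dim \<delta> d \<tau> l" "eq_ren (phi0 x \<phi>) (tau \<tau> j0)"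
  shows "sat D \<phi> x t \<longleftrightarrow> sat D (tau \<tau> j0) x t \<and>
    (\<forall>c j. 1 \<le> j \<and> j \<le> NPi_dim \<delta> d \<tau> l \<and> (\<exists>y. EA c x y \<in> \<phi> \<and> eq_ren (subf \<phi> y) (tau \<tau> j))
        \<longrightarrow> (\<exists>u. EA c t u \<in> D \<and> sat D (tau \<tau> j) x u))"
proof -
  have tl: "tree_like \<delta> x \<phi>" by (rule dftree_tl[OF dt])
  have len: "j \<le> length \<tau>" if "1 \<le> j" "j \<le> NPi_dim \<delta> d \<tau> l" for j using DIM[OF en l] that by blast
  have tlj: "tree_like \<delta> x (tau \<tau> j)" if "1 \<le> j" "j \<le> NPi_dim \<delta> d \<tau> l" for j
    using dftree_tl[OF enum_dftree[OF en that(1) len[OF that]]] .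
  have s0: "sat D (tau \<tau> j0) x t \<longleftrightarrow> (\<forall>j. UA j x \<in> \<phi> \<longrightarrow> UA j t \<in> D)"
    using sat_eqren[OF dftree_tl[OF phi0_dftree(1)[OF tl]] tlj[OF j0(1,2)] j0(3)] sat_phi0 by metis
  have edge: "(\<forall>c y. EA c x y \<in> \<phi> \<longrightarrow> (\<exists>u. EA c t u \<in> D \<and> sat D (subf \<phi> y) y u)) \<longleftrightarrow>
    (\<forall>c j. 1 \<le> j \<and> j \<le> NPi_dim \<delta> d \<tau> l \<and> (\<exists>y. EA c x y \<in> \<phi> \<and> eq_ren (subf \<phi> y) (tau \<tau> j))
        \<longrightarrow> (\<exists>u. EA c t u \<in> D \<and> sat D (tau \<tau> j) x u))"
  proof (intro iffI allI impI)
    fix c j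
    assume h: "\<forall>c y. EA c x y \<in> \<phi> \<longrightarrow> (\<exists>u. EA c t u \<in> D \<and> sat D (subf \<phi> y) y u)"
      and a: "1 \<le> j \<and> j \<le> NPi_dim \<delta> d \<tau> l \<and> (\<exists>y. EA c x y \<in> \<phi> \<and> eq_ren (subf \<phi> y) (tau \<tau> j))"
    from a obtain y where y: "EA c x y \<in> \<phi>" "eq_ren (subf \<phi> y) (tau \<tau> j)" by blast
    have tj: "tree_like \<delta> x (tau \<tau> j)" using tlj a by blast
    have eqv: "sat D (subf \<phi> y) y u \<longleftrightarrow> sat D (tau \<tau> j) x u" for u
      using sat_eqren[OF child_tl[OF tl y(1)] tj y(2)] .
    from h y(1) obtain u where "EA c t u \<in> D" "sat D (subf \<phi> y) y u" by blast
    then show "\<exists>u. EA c t u \<in> D \<and> sat D (tau \<tau> j) x u" using eqv by blast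
  next
    fix c y
    assume h: "\<forall>c j. 1 \<le> j \<and> j \<le> NPi_dim \<delta> d \<tau> l \<and> (\<exists>y. EA c x y \<in> \<phi> \<and> eq_ren (subf \<phi> y) (tau \<tau> j))
        \<longrightarrow> (\<exists>u. EA c t u \<in> D \<and> sat D (tau \<tau> j) x u)"
      and e: "EA c x y \<in> \<phi>"
    obtain j where j: "1 \<le> j" "j \<le> NPi_dim \<delta> d \<tau> l" "eq_ren (subf \<phi> y) (tau \<tau> j)"
      using child_index[OF en dt e dep l] by blast
    have eqv: "sat D (subf \<phi> y) y u \<longleftrightarrow> sat D (tau \<tau> j) x u" for u
      using sat_eqren[OF child_tl[OF tl e] tlj[OF j(1,2)] j(3)] .
    have "1 \<le> j \<and> j \<le> NPi_dim \<delta> d \<tau> l \<and> (\<exists>y. EA c x y \<in> \<phi> \<and> eq_ren (subf \<phi> y) (tau \<tau> j))"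
      using j e by blast
    then have "\<exists>u. EA c t u \<in> D \<and> sat D (tau \<tau> j) x u" using h by blast
    then show "\<exists>u. EA c t u \<in> D \<and> sat D (subf \<phi> y) y u" using eqv by blast
  qed
  show ?thesis using DEC[OF tl, of D t] s0 edge unfolding RHS_def by blast
qed

lemma key2:
  fixes a m :: "'q \<Rightarrow> 'r \<Rightarrow> real" and c0 :: real
  assumes "finite C" "finite J" "\<forall>c\<in>C. \<forall>j\<in>J. a c j \<in> {0,1} \<and> m c j \<in> {0,1}" "c0 \<in> {0,1}"
  shows "relu (c0 + (\<Sum>c\<in>C. \<Sum>j\<in>J. a c j * m c j) - (\<Sum>c\<in>C. \<Sum>j\<in>J. a c j)) =
    (if c0 = 1 \<and> (\<forall>c\<in>C. \<forall>j\<in>J. a c j = 1 \<longrightarrow> m c j = 1) then 1 else 0)"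
proof -
  have e1: "(\<Sum>c\<in>C. \<Sum>j\<in>J. a c j * m c j) = (\<Sum>p\<in>C \<times> J. (\<lambda>p. a (fst p) (snd p)) p * (\<lambda>p. m (fst p) (snd p)) p)"
    by (simp add: sum.cartesian_product case_prod_beta)
  have e2: "(\<Sum>c\<in>C. \<Sum>j\<in>J. a c j) = (\<Sum>p\<in>C \<times> J. (\<lambda>p. a (fst p) (snd p)) p)"
    by (simp add: sum.cartesian_product case_prod_beta)
  have "relu (c0 + (\<Sum>p\<in>C \<times> J. (\<lambda>p. a (fst p) (snd p)) p * (\<lambda>p. m (fst p) (snd p)) p) - (\<Sum>p\<in>C \<times> J. (\<lambda>p. a (fst p) (snd p)) p)) =
    (if c0 = 1 \<and> (\<forall>p\<in>C \<times> J. (\<lambda>p. a (fst p) (snd p)) p = 1 \<longrightarrow> (\<lambda>p. m (fst p) (snd p)) p = 1) then 1 else 0)"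
    by (rule key) (use assms in auto)
  then show ?thesis unfolding e1 e2 by auto
qed

lemma adom_finite: "finite D \<Longrightarrow> finite (adom D)"
  unfolding adom_def using finite_atom_terms by blast

lemma nbr_adom: "{u. EA c t u \<in> D} \<subseteq> adom D"
  unfolding adom_def by (force intro!: bexI[of _ "EA c t _"])

lemma nbr_adom': "EA c t u \<in> D \<Longrightarrow> u \<in> adom D"
  unfolding adom_def by (rule UN_I[of "EA c t u"]) simp_all

lemma main:
  fixes \<tau> :: "('col::finite) formula list" and \<Pi> :: "'col rule set" and D :: "('col, 'c) atom set"
  assumes en: "tree_enum \<delta> d f x \<tau>" and ds: "sig_dataset \<delta> D"
  shows "1 \<le> l \<Longrightarrow> l < d + 2 \<Longrightarrow> 1 \<le> i \<Longrightarrow> i \<le> NPi_dim \<delta> d \<tau> l \<Longrightarrow> t \<in> adom D \<Longrightarrow>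
     gnn_vec (NPi \<delta> d x \<tau> \<Pi>) (enc_E D) (enc_feat D) l t i = (if sat D (tau \<tau> i) x t then 1 else 0)"
proof (induction l arbitrary: i t)
  case 0 then show ?case by simp
next
  case (Suc l)
  let ?N = "NPi \<delta> d x \<tau> \<Pi>"
  let ?v = "gnn_vec ?N (enc_E D) (enc_feat D)"
  let ?m = "NPi_dim \<delta> d \<tau> l"
  let ?agg = "\<lambda>c j. max_agg (image_mset (?v l) (mset_set {u. EA c t u \<in> D})) j"
  have unf: "?v (Suc l) t i = relu ((\<Sum>j = 1..?m. NPi_A \<delta> d x \<tau> \<Pi> (Suc l) i j * ?v l t j)
      + (\<Sum>c\<in>UNIV. \<Sum>j = 1..?m. NPi_B \<delta> d x \<tau> (Suc l) c i j * ?agg c j)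
      + NPi_b \<delta> d x \<tau> \<Pi> (Suc l) i)"
    by (simp add: NPi_def enc_E_def)
  have finD: "finite D" using ds by (simp add: sig_dataset_def)
  have finN: "finite {u. EA c t u \<in> D}" for c using adom_finite[OF finD] nbr_adom finite_subset by metis
  show ?case
  proof (cases "l = 0")
    case True
    have dim0: "?m = \<delta>" using True by (simp add: NPi_dim_def)
    have v0: "?v l = enc_feat D" using True by simp
    have dep: "fdepth (tau \<tau> i) \<le> 0" and il: "i \<le> length \<tau>"
      using DIM[OF en, of "Suc l" i] Suc.prems True by auto
    have dt: "dftree \<delta> d f x (tau \<tau> i)" using enum_dftree[OF en Suc.prems(3) il] .
    have tl: "tree_like \<delta> x (tau \<tau> i)" by (rule dftree_tl[OF dt])
    have noE: "EA c a b \<notin> tau \<tau> i" for c a b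
    proof
      assume "EA c a b \<in> tau \<tau> i"
      then have "chain_to (tau \<tau> i) (Suc 0) b" by (rule chain_edge)
      then show False using fdepth_le[OF tl_finite[OF tl] dftree_bnd[OF dt]] dep by fastforce
    qed
    have sem: "sat D (tau \<tau> i) x t \<longleftrightarrow> (\<forall>j\<in>{1..\<delta>}. UA j x \<in> tau \<tau> i \<longrightarrow> UA j t \<in> D)"
      using DEC[OF tl, of D t] noE tl_T5[OF tl] unfolding RHS_def by auto
    let ?a = "\<lambda>(c::'col) j. NPi_A \<delta> d x \<tau> \<Pi> (Suc l) i j"
    let ?mm = "\<lambda>(c::'col) j. enc_feat D t j"
    have A: "NPi_A \<delta> d x \<tau> \<Pi> (Suc l) i j = (if UA j x \<in> tau \<tau> i then 1 else 0)" for j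
      using True by (simp add: NPi_A_def)
    have B: "NPi_B \<delta> d x \<tau> (Suc l) c i j = 0" for c j using True by (simp add: NPi_B_def)
    have b: "NPi_b \<delta> d x \<tau> \<Pi> (Suc l) i = 1 - (\<Sum>j = 1..\<delta>. NPi_A \<delta> d x \<tau> \<Pi> (Suc l) i j)"
      using True dim0 B by (simp add: NPi_b_def)
    have val: "?v (Suc l) t i = relu (1 + (\<Sum>j = 1..\<delta>. NPi_A \<delta> d x \<tau> \<Pi> (Suc l) i j * enc_feat D t j)
        - (\<Sum>j = 1..\<delta>. NPi_A \<delta> d x \<tau> \<Pi> (Suc l) i j))"
      unfolding unf dim0 v0 b B by (simp add: algebra_simps)
    have "relu (1 + (\<Sum>j = 1..\<delta>. NPi_A \<delta> d x \<tau> \<Pi> (Suc l) i j * enc_feat D t j)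
        - (\<Sum>j = 1..\<delta>. NPi_A \<delta> d x \<tau> \<Pi> (Suc l) i j)) =
      (if 1 = (1::real) \<and> (\<forall>j\<in>{1..\<delta>}. NPi_A \<delta> d x \<tau> \<Pi> (Suc l) i j = 1 \<longrightarrow> enc_feat D t j = 1) then 1 else 0)"
      by (rule key) (auto simp: A enc_feat_def)
    also have "\<dots> = (if sat D (tau \<tau> i) x t then 1 else 0)"
      unfolding sem by (auto simp: A enc_feat_def)
    finally show ?thesis using val by simp
  next
    case False
    then have l1: "1 \<le> l" by simp
    have ld: "l < d + 2" using Suc.prems(2) by simp
    have IH: "?v l u j = (if sat D (tau \<tau> j) x u then 1 else 0)"
      if "1 \<le> j" "j \<le> ?m" "u \<in> adom D" for j u using Suc.IH l1 ld that by blast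
    have aggv: "?agg c j = (if \<exists>u. EA c t u \<in> D \<and> sat D (tau \<tau> j) x u then 1 else 0)"
      if "1 \<le> j" "j \<le> ?m" for c j
    proof -
      have "\<forall>u\<in>{u. EA c t u \<in> D}. ?v l u j \<in> {0, 1}"
      proof
        fix u assume "u \<in> {u. EA c t u \<in> D}"
        then have "u \<in> adom D" by (intro nbr_adom'[of c t]) simp
        then show "?v l u j \<in> {0, 1}" using IH[OF that] by simp
      qed
      then have "?agg c j = (if \<exists>u\<in>{u. EA c t u \<in> D}. ?v l u j = 1 then 1 else 0)"
        by (rule agg_val[OF finN])
      also have "\<dots> = (if \<exists>u. EA c t u \<in> D \<and> sat D (tau \<tau> j) x u then 1 else 0)"
      proof -
        have "?v l u j = 1 \<longleftrightarrow> sat D (tau \<tau> j) x u" if "EA c t u \<in> D" for u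
          using IH[OF \<open>1 \<le> j\<close> \<open>j \<le> ?m\<close> nbr_adom'[OF that]] by simp
        then have "(\<exists>u\<in>{u. EA c t u \<in> D}. ?v l u j = 1) \<longleftrightarrow> (\<exists>u. EA c t u \<in> D \<and> sat D (tau \<tau> j) x u)"
          by blast
        then show ?thesis by simp
      qed
      finally show ?thesis .
    qed
    show ?thesis
    proof (cases "i \<le> ?m")
      case True
      have A: "NPi_A \<delta> d x \<tau> \<Pi> (Suc l) i j = (if j = i then 1 else 0)" for j
        using True l1 Suc.prems(2) by (auto simp: NPi_A_def)
      have B: "NPi_B \<delta> d x \<tau> (Suc l) c i j = 0" for c j using True by (simp add: NPi_B_def)
      have b: "NPi_b \<delta> d x \<tau> \<Pi> (Suc l) i = 0" using True l1 by (simp add: NPi_b_def)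
      have SA: "(\<Sum>j = 1..?m. NPi_A \<delta> d x \<tau> \<Pi> (Suc l) i j * ?v l t j) = ?v l t i"
      proof -
        have "(\<Sum>j = 1..?m. NPi_A \<delta> d x \<tau> \<Pi> (Suc l) i j * ?v l t j) = (\<Sum>j = 1..?m. (if j = i then ?v l t j else 0))"
          by (rule sum.cong) (simp_all add: A)
        also have "\<dots> = ?v l t i" using True Suc.prems(3) by (simp add: sum.delta')
        finally show ?thesis .
      qed
      have "?v (Suc l) t i = relu (?v l t i)" unfolding unf SA B b by simp
      also have "\<dots> = ?v l t i" using IH[OF Suc.prems(3) True Suc.prems(5)] by (simp add: relu_def)
      finally show ?thesis using IH[OF Suc.prems(3) True Suc.prems(5)] by simp
    next
      case False
      then have new: "?m < i" by simp
      have dep: "fdepth (tau \<tau> i) \<le> l" and il: "i \<le> length \<tau>"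
        using DIM[OF en, of "Suc l" i] Suc.prems by auto
      have dt: "dftree \<delta> d f x (tau \<tau> i)" using enum_dftree[OF en Suc.prems(3) il] .
      have tl: "tree_like \<delta> x (tau \<tau> i)" by (rule dftree_tl[OF dt])
      obtain j0 where j0: "1 \<le> j0" "j0 \<le> ?m" "eq_ren (phi0 x (tau \<tau> i)) (tau \<tau> j0)"
        using phi0_index[OF en tl l1 ld] by blast
      have lenm: "j \<le> length \<tau>" if "1 \<le> j" "j \<le> ?m" for j using DIM[OF en l1 ld] that by blast
      have A0: "NPi_A \<delta> d x \<tau> \<Pi> (Suc l) i j = (if eq_ren (phi0 x (tau \<tau> i)) (tau \<tau> j) then 1 else 0)" for j
        using new Suc.prems(2,4) l1 by (auto simp: NPi_A_def)
      have A: "NPi_A \<delta> d x \<tau> \<Pi> (Suc l) i j = (if j = j0 then 1 else 0)" if "j \<in> {1..?m}" for j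
      proof -
        have "eq_ren (phi0 x (tau \<tau> i)) (tau \<tau> j) \<longleftrightarrow> j = j0"
        proof
          assume "eq_ren (phi0 x (tau \<tau> i)) (tau \<tau> j)"
          then show "j = j0" using enum_uniq[OF en phi0_dftree(1)[OF tl], of j j0] that j0 lenm by auto
        next
          assume "j = j0" then show "eq_ren (phi0 x (tau \<tau> i)) (tau \<tau> j)" using j0 by simp
        qed
        then show ?thesis using A0 by simp
      qed
      let ?Bp = "\<lambda>c j. \<exists>y. EA c x y \<in> tau \<tau> i \<and> eq_ren (subf (tau \<tau> i) y) (tau \<tau> j)"
      have B: "NPi_B \<delta> d x \<tau> (Suc l) c i j = (if ?Bp c j then 1 else 0)" for c j
        using new Suc.prems(2,4) l1 by (auto simp: NPi_B_def)
      have SA: "(\<Sum>j = 1..?m. NPi_A \<delta> d x \<tau> \<Pi> (Suc l) i j * ?v l t j) = ?v l t j0"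
      proof -
        have "(\<Sum>j = 1..?m. NPi_A \<delta> d x \<tau> \<Pi> (Suc l) i j * ?v l t j) = (\<Sum>j = 1..?m. (if j = j0 then ?v l t j else 0))"
          by (rule sum.cong) (simp_all add: A)
        also have "\<dots> = ?v l t j0" using j0 by (simp add: sum.delta')
        finally show ?thesis .
      qed
      have SA1: "(\<Sum>j = 1..?m. NPi_A \<delta> d x \<tau> \<Pi> (Suc l) i j) = 1"
      proof -
        have "(\<Sum>j = 1..?m. NPi_A \<delta> d x \<tau> \<Pi> (Suc l) i j) = (\<Sum>j = 1..?m. (if j = j0 then 1 else 0))"
          by (rule sum.cong) (simp_all add: A)
        also have "\<dots> = 1" using j0 by (simp add: sum.delta')
        finally show ?thesis .
      qed
      have b: "NPi_b \<delta> d x \<tau> \<Pi> (Suc l) i = 1 - (1 + (\<Sum>c\<in>UNIV. \<Sum>j = 1..?m. NPi_B \<delta> d x \<tau> (Suc l) c i j))"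
      proof -
        have "NPi_b \<delta> d x \<tau> \<Pi> (Suc l) i = 1 - (\<Sum>j = 1..?m. NPi_A \<delta> d x \<tau> \<Pi> (Suc l) i j + (\<Sum>c\<in>UNIV. NPi_B \<delta> d x \<tau> (Suc l) c i j))"
          using new Suc.prems(2,4) by (simp add: NPi_b_def)
        also have "\<dots> = 1 - (1 + (\<Sum>c\<in>UNIV. \<Sum>j = 1..?m. NPi_B \<delta> d x \<tau> (Suc l) c i j))"
        proof -
          have "(\<Sum>j = 1..?m. NPi_A \<delta> d x \<tau> \<Pi> (Suc l) i j + (\<Sum>c\<in>UNIV. NPi_B \<delta> d x \<tau> (Suc l) c i j))
            = (\<Sum>j = 1..?m. NPi_A \<delta> d x \<tau> \<Pi> (Suc l) i j) + (\<Sum>j = 1..?m. \<Sum>c\<in>UNIV. NPi_B \<delta> d x \<tau> (Suc l) c i j)"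
            by (rule sum.distrib)
          also have "\<dots> = 1 + (\<Sum>c\<in>UNIV. \<Sum>j = 1..?m. NPi_B \<delta> d x \<tau> (Suc l) c i j)"
            unfolding SA1 by (subst sum.swap) (rule refl)
          finally show ?thesis by simp
        qed
        finally show ?thesis .
      qed
      have val: "?v (Suc l) t i = relu (?v l t j0 + (\<Sum>c\<in>UNIV. \<Sum>j\<in>{1..?m}. NPi_B \<delta> d x \<tau> (Suc l) c i j * ?agg c j)
         - (\<Sum>c\<in>UNIV. \<Sum>j\<in>{1..?m}. NPi_B \<delta> d x \<tau> (Suc l) c i j))"
        unfolding unf SA b by (simp add: algebra_simps)
      have tadom: "t \<in> adom D" by (rule Suc.prems(5))
      have v0: "?v l t j0 = (if sat D (tau \<tau> j0) x t then 1 else 0)" by (rule IH[OF j0(1,2) tadom])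
      have "relu (?v l t j0 + (\<Sum>c\<in>UNIV. \<Sum>j\<in>{1..?m}. NPi_B \<delta> d x \<tau> (Suc l) c i j * ?agg c j)
         - (\<Sum>c\<in>UNIV. \<Sum>j\<in>{1..?m}. NPi_B \<delta> d x \<tau> (Suc l) c i j)) =
        (if ?v l t j0 = 1 \<and> (\<forall>c\<in>UNIV. \<forall>j\<in>{1..?m}. NPi_B \<delta> d x \<tau> (Suc l) c i j = 1 \<longrightarrow> ?agg c j = 1) then 1 else 0)"
        by (rule key2) (auto simp: B aggv v0)
      also have "\<dots> = (if sat D (tau \<tau> i) x t then 1 else 0)"
      proof -
        have e1: "sat D (tau \<tau> i) x t \<longleftrightarrow> sat D (tau \<tau> j0) x t \<and>
          (\<forall>c j. 1 \<le> j \<and> j \<le> ?m \<and> ?Bp c j \<longrightarrow> (\<exists>u. EA c t u \<in> D \<and> sat D (tau \<tau> j) x u))"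
          by (rule new_row_sem[OF en dt dep l1 ld j0])
        have e2: "(\<forall>c\<in>UNIV. \<forall>j\<in>{1..?m}. NPi_B \<delta> d x \<tau> (Suc l) c i j = 1 \<longrightarrow> ?agg c j = 1) \<longleftrightarrow>
          (\<forall>c j. 1 \<le> j \<and> j \<le> ?m \<and> ?Bp c j \<longrightarrow> (\<exists>u. EA c t u \<in> D \<and> sat D (tau \<tau> j) x u))"
        proof (intro iffI allI impI ballI)
          fix c j
          assume H: "\<forall>c\<in>UNIV. \<forall>j\<in>{1..?m}. NPi_B \<delta> d x \<tau> (Suc l) c i j = 1 \<longrightarrow> ?agg c j = 1"
            and a: "1 \<le> j \<and> j \<le> ?m \<and> ?Bp c j"
          then have "NPi_B \<delta> d x \<tau> (Suc l) c i j = 1" using B by simp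
          then have "?agg c j = 1" using H a by simp
          then show "\<exists>u. EA c t u \<in> D \<and> sat D (tau \<tau> j) x u" using aggv[of j c] a
            by (auto split: if_splits)
        next
          fix c j
          assume H: "\<forall>c j. 1 \<le> j \<and> j \<le> ?m \<and> ?Bp c j \<longrightarrow> (\<exists>u. EA c t u \<in> D \<and> sat D (tau \<tau> j) x u)"
            and jr: "j \<in> {1..?m}" and b1: "NPi_B \<delta> d x \<tau> (Suc l) c i j = 1"
          have "?Bp c j" using b1 B[of c j] by (auto split: if_splits)
          then have "\<exists>u. EA c t u \<in> D \<and> sat D (tau \<tau> j) x u" using H jr by simp
          then show "?agg c j = 1" using aggv[of j c] jr by simp
        qed
        have e3: "?v l t j0 = 1 \<longleftrightarrow> sat D (tau \<tau> j0) x t" using v0 by simp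
        show ?thesis by (simp only: e1 e2 e3)
      qed
      finally show ?thesis using val by simp
    qed
  qed
qed

theorem lemma7:
  fixes \<delta> d f x :: nat
    and \<tau> :: "('col::finite) formula list"
    and \<Pi> :: "'col rule set"
    and D :: "('col, 'c) atom set"
    and l i :: nat and t :: 'c
  assumes "finite \<Pi>"
    and "\<forall>r\<in>\<Pi>. dftree_rule \<delta> d f r"
    and "tree_enum \<delta> d f x \<tau>"
    and "sig_dataset \<delta> D"
    and "1 \<le> l" and "l < d + 2"
    and "1 \<le> i" and "i \<le> NPi_dim \<delta> d \<tau> l"
    and "t \<in> adom D"
  shows "gnn_vec (NPi \<delta> d x \<tau> \<Pi>) (enc_E D) (enc_feat D) l t i =
           (if \<exists>\<nu>. \<nu> x = t \<and> subst_atom \<nu> ` tau \<tau> i \<subseteq> D then 1 else 0)"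
  using main[OF assms(3,4) assms(5-9)] unfolding sat_def .

end
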